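(* Let $\epsilon\in(0,1)$ be sufficiently small and consider a single buyer. Even with exact targeted queries (i.e., $\Delta=0$), every (possibly randomized) algorithm that outputs an auction $M$ must use: (1) $\Omega(\log\epsilon^{-1})$ targeted queries to guarantee $\mathbf E[\mathrm{Rev}(M,D)]\ge(1-\epsilon)\mathrm{OPT}(D)$ for every regular $D$; (2) $\Omega(\epsilon^{-1})$ targeted queries to guarantee $\mathbf E[\mathrm{Rev}(M,D)]\ge\mathrm{OPT}(D)-\epsilon$ for every $[0,1]$-bounded $D$; (3) $\Omega(\epsilon^{-1}\log H)$ targeted queries to guarantee $\mathbf E[\mathrm{Rev}(M,D)]\ge(1-\epsilon)\mathrm{OPT}(D)$ for every $[1,H]$-bounded $D$. Here the expectation is over the algorithm's randomness.
   Context: Single buyer with value $v\sim D$ on $[0,\infty)$; $\mathrm{OPT}(D)$ is the maximum expected revenue over DSIC, IR mechanisms (best posted price). Quantile $q^D(v)=\Pr_{x\sim D}[x\ge v]$; value at quantile $v^D(q)=\sup\{v\ge0:q^D(v)\ge q\}$; a targeted query $q\in(0,1]$ returns $v^D(q)$; queries may be chosen adaptively. Regular: revenue curve $R(q)=q\,v^D(q)$ concave (equivalently nondecreasing virtual value); $[1,H]$-bounded / $[0,1]$-bounded: support contained in $[1,H]$ / $[0,1]$. *)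

theory Defs
  imports "HOL-Probability.Probability"
begin

definition val_dist :: "real measure \<Rightarrow> bool" where
  "val_dist D \<longleftrightarrow> prob_space D \<and> sets D = sets borel \<and> measure D {0..} = 1"

definition quantile :: "real measure \<Rightarrow> real \<Rightarrow> real" where
  "quantile D v = measure D {v..}"

text \<open>Value at quantile: v^D(q) = sup {v >= 0. q^D(v) >= q}; this is the
  answer to a targeted query q in (0,1].\<close>
definition value_at :: "real measure \<Rightarrow> real \<Rightarrow> real" where
  "value_at D q = Sup {v. 0 \<le> v \<and> quantile D v \<ge> q}"

definition rev_curve :: "real measure \<Rightarrow> real \<Rightarrow> real" where
  "rev_curve D q = q * value_at D q"

definition regular_dist :: "real measure \<Rightarrow> bool" where
  "regular_dist D \<longleftrightarrow> val_dist D \<and> concave_on {0<..1} (rev_curve D)"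

definition bounded_dist :: "real \<Rightarrow> real \<Rightarrow> real measure \<Rightarrow> bool" where
  "bounded_dist a b D \<longleftrightarrow> val_dist D \<and> measure D {a..b} = 1"

definition rev_price :: "real measure \<Rightarrow> real \<Rightarrow> real" where
  "rev_price D p = p * quantile D p"

definition OPT :: "real measure \<Rightarrow> real" where
  "OPT D = (SUP p\<in>{0..}. rev_price D p)"

text \<open>Randomized adaptive query algorithm: random seed omega drawn from the
  probability space P; Qry omega as is the next targeted query given the
  answers as received so far; Out omega as is the price output after all
  queries.\<close>
definition rand_alg :: "real measure \<Rightarrow> (real \<Rightarrow> real list \<Rightarrow> real) \<Rightarrow> bool" where
  "rand_alg P Qry \<longleftrightarrow> prob_space P \<and> (\<forall>\<omega> as. Qry \<omega> as \<in> {0<..1})"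

fun answers :: "(real \<Rightarrow> real list \<Rightarrow> real) \<Rightarrow> real measure \<Rightarrow> real \<Rightarrow> nat \<Rightarrow> real list" where
  "answers Qry D \<omega> 0 = []"
| "answers Qry D \<omega> (Suc n) =
     (let as = answers Qry D \<omega> n in as @ [value_at D (Qry \<omega> as)])"

definition exp_rev ::
  "real measure \<Rightarrow> (real \<Rightarrow> real list \<Rightarrow> real) \<Rightarrow> (real \<Rightarrow> real list \<Rightarrow> real) \<Rightarrow> nat \<Rightarrow> real measure \<Rightarrow> ennreal" where
  "exp_rev P Qry Out k D = (\<integral>\<^sup>+ \<omega>. ennreal (rev_price D (Out \<omega> (answers Qry D \<omega> k))) \<partial>P)"

end

theory Submission
  imports Defs
begin

lemma nn_integral_superadd:
  "integral\<^sup>N M f + integral\<^sup>N M g \<le> (\<integral>\<^sup>+ x. f x + g x \<partial>M)"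
proof -
  have key: "integral\<^sup>S M a + integral\<^sup>S M b \<le> (\<integral>\<^sup>+ x. f x + g x \<partial>M)"
    if a: "simple_function M a" "a \<le> f" and b: "simple_function M b" "b \<le> g" for a b
  proof -
    have "integral\<^sup>S M a + integral\<^sup>S M b = (\<integral>\<^sup>S x. a x + b x \<partial>M)"
      using a b by (simp add: simple_integral_add)
    also have "\<dots> = (\<integral>\<^sup>+ x. a x + b x \<partial>M)"
      using a b by (simp add: nn_integral_eq_simple_integral simple_function_add)
    also have "\<dots> \<le> (\<integral>\<^sup>+ x. f x + g x \<partial>M)"
      using a b by (intro nn_integral_mono) (auto simp: le_fun_def intro: add_mono)
    finally show ?thesis .
  qed
  have ne: "{g. simple_function M g \<and> g \<le> h} \<noteq> {}" for h :: "_ \<Rightarrow> ennreal"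
  proof -
    have "(\<lambda>_. 0) \<in> {g. simple_function M g \<and> g \<le> h}" by (auto simp: le_fun_def)
    then show ?thesis by blast
  qed
  let ?A = "{a. simple_function M a \<and> a \<le> f}" and ?B = "{b. simple_function M b \<and> b \<le> g}"
  have "(SUP a\<in>?A. integral\<^sup>S M a) + (SUP b\<in>?B. integral\<^sup>S M b)
      = (SUP a\<in>?A. integral\<^sup>S M a + (SUP b\<in>?B. integral\<^sup>S M b))"
    by (rule ennreal_SUP_add_left[symmetric, OF ne])
  also have "\<dots> \<le> (\<integral>\<^sup>+ x. f x + g x \<partial>M)"
  proof (rule SUP_least)
    fix a assume a: "a \<in> ?A"
    have "integral\<^sup>S M a + (SUP b\<in>?B. integral\<^sup>S M b) = (SUP b\<in>?B. integral\<^sup>S M a + integral\<^sup>S M b)"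
      by (rule ennreal_SUP_add_right[OF ne])
    also have "\<dots> \<le> (\<integral>\<^sup>+ x. f x + g x \<partial>M)"
      using a key by (intro SUP_least) auto
    finally show "integral\<^sup>S M a + (SUP b\<in>?B. integral\<^sup>S M b) \<le> (\<integral>\<^sup>+ x. f x + g x \<partial>M)" .
  qed
  finally show ?thesis unfolding nn_integral_def[of M f] nn_integral_def[of M g] .
qed

lemma nn_integral_sum_superadd:
  assumes "finite I"
  shows "(\<Sum>i\<in>I. integral\<^sup>N M (f i)) \<le> (\<integral>\<^sup>+ x. (\<Sum>i\<in>I. f i x) \<partial>M)"
  using assms
proof (induction I rule: finite_induct)
  case empty then show ?case by simp
next
  case (insert j I)
  have "(\<Sum>i\<in>insert j I. integral\<^sup>N M (f i)) = integral\<^sup>N M (f j) + (\<Sum>i\<in>I. integral\<^sup>N M (f i))"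
    using insert by simp
  also have "\<dots> \<le> integral\<^sup>N M (f j) + (\<integral>\<^sup>+ x. (\<Sum>i\<in>I. f i x) \<partial>M)"
    using insert by (intro add_left_mono) auto
  also have "\<dots> \<le> (\<integral>\<^sup>+ x. f j x + (\<Sum>i\<in>I. f i x) \<partial>M)"
    by (rule nn_integral_superadd)
  also have "\<dots> = (\<integral>\<^sup>+ x. (\<Sum>i\<in>insert j I. f i x) \<partial>M)"
    using insert by simp
  finally show ?case .
qed

lemma yao:
  assumes P: "prob_space P" and fin: "finite I"
    and guar: "\<And>i. i \<in> I \<Longrightarrow> exp_rev P Qry Out k (D i) \<ge> ennreal T"
    and pw: "\<And>\<omega>. (\<Sum>i\<in>I. ennreal (rev_price (D i) (Out \<omega> (answers Qry (D i) \<omega> k)))) \<le> ennreal B"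
    and T: "T \<ge> 0" and B: "B \<ge> 0"
  shows "real (card I) * T \<le> B"
proof -
  have "ennreal (real (card I) * T) = (\<Sum>i\<in>I. ennreal T)"
    using T by (simp add: ennreal_mult ennreal_of_nat_eq_real_of_nat)
  also have "\<dots> \<le> (\<Sum>i\<in>I. exp_rev P Qry Out k (D i))"
    using guar by (intro sum_mono) auto
  also have "\<dots> \<le> (\<integral>\<^sup>+ \<omega>. (\<Sum>i\<in>I. ennreal (rev_price (D i) (Out \<omega> (answers Qry (D i) \<omega> k)))) \<partial>P)"
    unfolding exp_rev_def by (rule nn_integral_sum_superadd[OF fin])
  also have "\<dots> \<le> (\<integral>\<^sup>+ \<omega>. ennreal B \<partial>P)"
    by (intro nn_integral_mono pw)
  also have "\<dots> = ennreal B"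
    using P by (simp add: prob_space.emeasure_space_1)
  finally have *: "ennreal (real (card I) * T) \<le> ennreal B" .
  then show ?thesis using B by (simp add: ennreal_le_iff)
qed

definition DC :: "(real \<Rightarrow> bool) \<Rightarrow> bool" where
  "DC Pr \<longleftrightarrow> (\<exists>S. 0 \<le> S \<and> S \<le> 1 \<and> (\<forall>q. 0 < q \<and> q \<le> 1 \<longrightarrow> (Pr q \<longleftrightarrow> q \<le> S)))"

definition U01 :: "real measure" where "U01 = restrict_space lborel {0<..1}"

definition mkD :: "(real \<Rightarrow> real) \<Rightarrow> real measure" where
  "mkD v = distr U01 borel v"

lemma space_U01[simp]: "space U01 = {0<..1}"
  by (simp add: U01_def)

lemma sets_U01_Ioc: "0 \<le> S \<Longrightarrow> S \<le> 1 \<Longrightarrow> {0<..S} \<in> sets U01"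
  unfolding U01_def by (auto simp: sets_restrict_space_iff)

lemma measure_U01_Ioc: "0 \<le> S \<Longrightarrow> S \<le> 1 \<Longrightarrow> measure U01 {0<..S} = S"
  unfolding U01_def by (subst measure_restrict_space) auto

lemma prob_U01: "prob_space U01"
proof
  show "emeasure U01 (space U01) = 1"
    unfolding U01_def by (subst emeasure_restrict_space) auto
qed

lemma DC_meas:
  fixes v :: "real \<Rightarrow> real"
  assumes "\<And>x. DC (\<lambda>q. x \<le> v q)"
  shows "v \<in> borel_measurable U01"
proof (rule borel_measurableI_ge)
  fix y
  from assms[of y] obtain S where S: "0 \<le> S" "S \<le> 1" "\<forall>q. 0 < q \<and> q \<le> 1 \<longrightarrow> (y \<le> v q \<longleftrightarrow> q \<le> S)"
    unfolding DC_def by blast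
  have "{x \<in> space U01. y \<le> v x} = {0<..S}" using S by auto
  then show "{x \<in> space U01. y \<le> v x} \<in> sets U01" using S sets_U01_Ioc by simp
qed

locale gdist =
  fixes v :: "real \<Rightarrow> real"
  assumes dc: "\<And>x. DC (\<lambda>q. x \<le> v q)"
    and nonneg: "\<And>q. 0 < q \<Longrightarrow> q \<le> 1 \<Longrightarrow> 0 \<le> v q"
begin

lemma meas: "v \<in> borel_measurable U01" by (rule DC_meas[OF dc])

lemma prob: "prob_space (mkD v)"
  unfolding mkD_def by (rule prob_space.prob_space_distr[OF prob_U01 meas])

lemma sets_mkD: "sets (mkD v) = sets borel" by (simp add: mkD_def)

lemma measure_mkD: "A \<in> sets borel \<Longrightarrow> measure (mkD v) A = measure U01 (v -` A \<inter> {0<..1})"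
  unfolding mkD_def by (subst measure_distr[OF meas]) auto

lemma quantile_eq:
  assumes S: "0 \<le> S" "S \<le> 1" "\<And>q. 0 < q \<Longrightarrow> q \<le> 1 \<Longrightarrow> (x \<le> v q \<longleftrightarrow> q \<le> S)"
  shows "quantile (mkD v) x = S"
proof -
  have "v -` {x..} \<inter> {0<..1} = {0<..S}" using S by auto
  then show ?thesis unfolding quantile_def
    by (simp add: measure_mkD measure_U01_Ioc S)
qed

lemma quantile_ex: "\<exists>S. 0 \<le> S \<and> S \<le> 1 \<and> (\<forall>q. 0 < q \<and> q \<le> 1 \<longrightarrow> (x \<le> v q \<longleftrightarrow> q \<le> S)) \<and> quantile (mkD v) x = S"
proof -
  from dc[of x] obtain S where S: "0 \<le> S" "S \<le> 1" "\<forall>q. 0 < q \<and> q \<le> 1 \<longrightarrow> (x \<le> v q \<longleftrightarrow> q \<le> S)"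
    unfolding DC_def by blast
  then show ?thesis using quantile_eq[of S x] by auto
qed

lemma quantile_ge_iff:
  assumes "0 < q" "q \<le> 1"
  shows "quantile (mkD v) x \<ge> q \<longleftrightarrow> x \<le> v q"
  using quantile_ex[of x] assms by auto

lemma quantile_nonneg: "quantile (mkD v) x \<ge> 0"
  using quantile_ex[of x] by auto

lemma quantile_le1: "quantile (mkD v) x \<le> 1"
  using quantile_ex[of x] by auto

lemma value_at_eq:
  assumes "0 < q" "q \<le> 1"
  shows "value_at (mkD v) q = v q"
proof -
  have "{w. 0 \<le> w \<and> quantile (mkD v) w \<ge> q} = {0..v q}"
    by (rule set_eqI) (simp add: quantile_ge_iff[OF assms])
  then show ?thesis unfolding value_at_def using nonneg[OF assms] by (simp add: cSup_atLeastAtMost)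
qed

lemma measure_range:
  assumes "\<And>q. 0 < q \<Longrightarrow> q \<le> 1 \<Longrightarrow> a \<le> v q \<and> v q \<le> b"
  shows "measure (mkD v) {a..b} = 1"
proof -
  have "v -` {a..b} \<inter> {0<..1} = {0<..1}" using assms by auto
  then show ?thesis by (simp add: measure_mkD measure_U01_Ioc)
qed

lemma val_dist: "val_dist (mkD v)"
proof -
  have "v -` {0..} \<inter> {0<..1} = {0<..1}" using nonneg by auto
  then have "measure (mkD v) {0..} = 1" by (simp add: measure_mkD measure_U01_Ioc)
  then show ?thesis unfolding val_dist_def using prob sets_mkD by simp
qed

lemma rev_price_eq: "rev_price (mkD v) p = p * quantile (mkD v) p"
  by (simp add: rev_price_def)

lemma rev_le_curve:
  assumes "p > 0" "quantile (mkD v) p > 0"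
  shows "rev_price (mkD v) p \<le> quantile (mkD v) p * v (quantile (mkD v) p)"
proof -
  let ?S = "quantile (mkD v) p"
  have "p \<le> v ?S" using quantile_ge_iff[of ?S p] assms quantile_le1 by auto
  then show ?thesis unfolding rev_price_def using assms by (simp add: mult.commute mult_left_mono)
qed

lemma rev_ge_curve:
  assumes "0 < q" "q \<le> 1"
  shows "rev_price (mkD v) (v q) \<ge> q * v q"
proof -
  have "quantile (mkD v) (v q) \<ge> q" using quantile_ge_iff[OF assms] by simp
  then show ?thesis unfolding rev_price_def using nonneg[OF assms] by (metis mult.commute mult_right_mono)
qed

end

locale bumpfam =
  fixes m :: nat and xs :: "nat \<Rightarrow> real" and r0 \<Delta> :: real
  assumes r0: "r0 > 0" and \<Delta>: "\<Delta> > 0" and x0: "xs 0 = r0"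
    and xinc: "\<And>j. j < m \<Longrightarrow> (r0 + \<Delta>) * xs j < r0 * xs (Suc j)"
begin

definition t :: "nat \<Rightarrow> real" where "t j = r0 / xs j"
definition t' :: "nat \<Rightarrow> real" where "t' j = (r0 + \<Delta>) / xs j"
definition tt :: "nat \<Rightarrow> nat \<Rightarrow> real" where "tt i j = (if j = i \<and> 0 < i then t' j else t j)"
definition vv :: "nat \<Rightarrow> real \<Rightarrow> real" where "vv i q = Max {xs j | j. j \<le> m \<and> q \<le> tt i j}"

lemma xs_pos: "j \<le> m \<Longrightarrow> xs j > 0"
proof (induction j)
  case 0 then show ?case using x0 r0 by simp
next
  case (Suc j)
  then have "xs j > 0" by simp
  then have "0 < (r0 + \<Delta>) * xs j" using r0 \<Delta> by simp
  also have "\<dots> < r0 * xs (Suc j)" using xinc Suc by simp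
  finally show ?case using r0 by (simp add: zero_less_mult_iff)
qed

lemma xs_step: "j < m \<Longrightarrow> xs j < xs (Suc j)"
proof -
  assume j: "j < m"
  have "r0 * xs j < (r0 + \<Delta>) * xs j" using xs_pos[of j] j \<Delta> by (simp add: mult_strict_right_mono)
  also have "\<dots> < r0 * xs (Suc j)" using xinc j by simp
  finally show ?thesis using r0 by simp
qed

lemma xs_mono: "i \<le> j \<Longrightarrow> j \<le> m \<Longrightarrow> xs i \<le> xs j"
proof (induction j)
  case 0 then show ?case by simp
next
  case (Suc j)
  show ?case
  proof (cases "i = Suc j")
    case True then show ?thesis by simp
  next
    case False
    then have "xs i \<le> xs j" using Suc by simp
    also have "\<dots> \<le> xs (Suc j)" using xs_step[of j] Suc by simp
    finally show ?thesis .
  qed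
qed

lemma xs_strict: "i < j \<Longrightarrow> j \<le> m \<Longrightarrow> xs i < xs j"
proof -
  assume "i < j" "j \<le> m"
  then obtain j' where j': "j = Suc j'" "i \<le> j'" by (cases j) auto
  then have "xs i \<le> xs j'" using xs_mono \<open>j \<le> m\<close> by simp
  also have "\<dots> < xs j" using xs_step[of j'] j' \<open>j \<le> m\<close> by simp
  finally show ?thesis .
qed

lemma t0: "t 0 = 1" using x0 r0 by (simp add: t_def)

lemma t_pos: "j \<le> m \<Longrightarrow> t j > 0" using xs_pos r0 by (simp add: t_def)
lemma t'_pos: "j \<le> m \<Longrightarrow> t' j > 0" using xs_pos r0 \<Delta> by (simp add: t'_def)

lemma t_anti: "i \<le> j \<Longrightarrow> j \<le> m \<Longrightarrow> t j \<le> t i"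
  unfolding t_def using xs_mono[of i j] xs_pos[of i] r0
  by (simp add: divide_left_mono)

lemma t'_lt: "1 \<le> j \<Longrightarrow> j \<le> m \<Longrightarrow> t' j < t (j - 1)"
proof -
  assume j: "1 \<le> j" "j \<le> m"
  then obtain j' where j': "j = Suc j'" by (cases j) auto
  have "(r0 + \<Delta>) * xs j' < r0 * xs j" using xinc[of j'] j j' by simp
  then show ?thesis unfolding t_def t'_def using xs_pos[of j] xs_pos[of j'] j j'
    by (simp add: divide_simps mult.commute)
qed

lemma t_lt_t': "j \<le> m \<Longrightarrow> t j < t' j"
  unfolding t_def t'_def using xs_pos[of j] \<Delta> by (simp add: divide_strict_right_mono)

lemma t_le1: "j \<le> m \<Longrightarrow> t j \<le> 1" using t_anti[of 0 j] t0 by simp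

lemma tt_le1: "j \<le> m \<Longrightarrow> tt i j \<le> 1"
proof -
  assume j: "j \<le> m"
  show ?thesis
  proof (cases "j = i \<and> 0 < i")
    case True
    then have "t' j < t (j - 1)" using t'_lt[of j] j by simp
    also have "\<dots> \<le> 1" using t_le1[of "j - 1"] j by simp
    finally show ?thesis using True by (simp add: tt_def)
  next
    case False then show ?thesis using t_le1 j by (auto simp: tt_def)
  qed
qed

lemma tt_pos: "j \<le> m \<Longrightarrow> tt i j > 0" using t_pos t'_pos by (simp add: tt_def)

lemma prod_t: "j \<le> m \<Longrightarrow> xs j * t j = r0" using xs_pos[of j] by (simp add: t_def)
lemma prod_t': "j \<le> m \<Longrightarrow> xs j * t' j = r0 + \<Delta>" using xs_pos[of j] by (simp add: t'_def)

lemma fin_set: "finite {xs j | j. j \<le> m \<and> q \<le> tt i j}" by simp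

lemma vv_ge: "j \<le> m \<Longrightarrow> q \<le> tt i j \<Longrightarrow> xs j \<le> vv i q"
  unfolding vv_def by (rule Max_ge) auto

lemma vv_obtain:
  assumes "q \<le> 1"
  shows "\<exists>j. j \<le> m \<and> q \<le> tt i j \<and> vv i q = xs j"
proof -
  have "tt i 0 = 1" using t0 by (simp add: tt_def)
  then have ne: "{xs j | j. j \<le> m \<and> q \<le> tt i j} \<noteq> {}" using assms by force
  have "vv i q \<in> {xs j | j. j \<le> m \<and> q \<le> tt i j}" unfolding vv_def by (rule Max_in[OF fin_set ne])
  then show ?thesis by auto
qed

lemma vv_ge_iff:
  assumes "q \<le> 1"
  shows "y \<le> vv i q \<longleftrightarrow> (\<exists>j. j \<le> m \<and> q \<le> tt i j \<and> y \<le> xs j)"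
proof
  assume "y \<le> vv i q"
  then show "\<exists>j. j \<le> m \<and> q \<le> tt i j \<and> y \<le> xs j" using vv_obtain[OF assms, of i] by auto
next
  assume "\<exists>j. j \<le> m \<and> q \<le> tt i j \<and> y \<le> xs j"
  then show "y \<le> vv i q" using vv_ge by (meson order_trans)
qed

lemma vv_range: "q \<le> 1 \<Longrightarrow> xs 0 \<le> vv i q \<and> vv i q \<le> xs m"
proof
  assume q: "q \<le> 1"
  have "tt i 0 = 1" using t0 by (simp add: tt_def)
  then show "xs 0 \<le> vv i q" using vv_ge[of 0 q i] q by simp
  from vv_obtain[OF q, of i] obtain j where "j \<le> m" "vv i q = xs j" by auto
  then show "vv i q \<le> xs m" using xs_mono by simp
qed

lemma gd: "gdist (vv i)"
proof
  fix y
  let ?T = "{tt i j | j. j \<le> m \<and> y \<le> xs j}"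
  define S where "S = Max (insert 0 ?T)"
  have fin: "finite (insert 0 ?T)" by simp
  have S0: "0 \<le> S" unfolding S_def by (rule Max_ge[OF fin]) simp
  have S1: "S \<le> 1" unfolding S_def using fin by (subst Max_le_iff) (auto intro: tt_le1)
  have "(y \<le> vv i q \<longleftrightarrow> q \<le> S)" if q: "0 < q" "q \<le> 1" for q
  proof -
    have "q \<le> S \<longleftrightarrow> (\<exists>a\<in>insert 0 ?T. q \<le> a)" unfolding S_def by (rule Max_ge_iff[OF fin]) simp
    also have "\<dots> \<longleftrightarrow> (\<exists>j. j \<le> m \<and> q \<le> tt i j \<and> y \<le> xs j)" using q by auto
    finally show ?thesis using vv_ge_iff[OF q(2)] by simp
  qed
  then show "DC (\<lambda>q. y \<le> vv i q)" unfolding DC_def using S0 S1 by blast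
next
  fix q :: real assume "0 < q" "q \<le> 1"
  then show "0 \<le> vv i q" using vv_range[of q i] x0 r0 by simp
qed

sublocale G: gdist "vv i" for i by (rule gd)

lemma rev_le: "rev_price (mkD (vv i)) p \<le> r0 + \<Delta>"
proof -
  let ?S = "quantile (mkD (vv i)) p"
  show ?thesis
  proof (cases "p > 0 \<and> ?S > 0")
    case True
    then have "rev_price (mkD (vv i)) p \<le> ?S * vv i ?S" using G.rev_le_curve by simp
    moreover obtain j where j: "j \<le> m" "?S \<le> tt i j" "vv i ?S = xs j"
      using vv_obtain[of ?S i] G.quantile_le1 by auto
    moreover have "?S * xs j \<le> tt i j * xs j" using j xs_pos[of j] by (simp add: mult_right_mono)
    moreover have "tt i j * xs j \<le> r0 + \<Delta>" using prod_t[of j] prod_t'[of j] j \<Delta>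
      by (auto simp: tt_def mult.commute)
    ultimately show ?thesis by simp
  next
    case False
    then have "rev_price (mkD (vv i)) p \<le> 0"
      using G.quantile_nonneg[of i p] unfolding rev_price_def
      by (auto simp: mult_nonpos_nonneg)
    then show ?thesis using r0 \<Delta> by simp
  qed
qed

lemma good_loc:
  assumes i: "1 \<le> i" "i \<le> m" and g: "rev_price (mkD (vv i)) p > r0"
  shows "xs (i - 1) < p \<and> p \<le> xs i"
proof -
  let ?S = "quantile (mkD (vv i)) p"
  have pS: "p > 0 \<and> ?S > 0"
  proof (rule ccontr)
    assume "\<not> (p > 0 \<and> ?S > 0)"
    then have "rev_price (mkD (vv i)) p \<le> 0"
      using G.quantile_nonneg[of i p] unfolding rev_price_def
      by (auto simp: mult_nonpos_nonneg)
    then show False using g r0 by simp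
  qed
  then have "rev_price (mkD (vv i)) p \<le> ?S * vv i ?S" using G.rev_le_curve by simp
  obtain j where j: "j \<le> m" "?S \<le> tt i j" "vv i ?S = xs j"
    using vv_obtain[of ?S i] G.quantile_le1 by auto
  have pj: "p \<le> xs j" using G.quantile_ge_iff[of ?S i p] pS G.quantile_le1 j by simp
  have "r0 < ?S * xs j" using g \<open>rev_price (mkD (vv i)) p \<le> ?S * vv i ?S\<close> j by simp
  also have "\<dots> \<le> tt i j * xs j" using j xs_pos[of j] by (simp add: mult_right_mono)
  finally have "r0 < tt i j * xs j" .
  then have ji: "j = i" using prod_t[of j] j by (auto simp: tt_def mult.commute split: if_splits)
  then have S_le: "?S \<le> t' i" using j i by (simp add: tt_def)
  have "xs (i - 1) < p"
  proof (rule ccontr)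
    assume "\<not> xs (i - 1) < p"
    then have "p \<le> xs (i - 1)" by simp
    moreover have "t (i - 1) \<le> tt i (i - 1)" using i by (auto simp: tt_def)
    moreover have "i - 1 \<le> m" using i by simp
    ultimately have "p \<le> vv i (t (i - 1))" using vv_ge[of "i - 1" "t (i - 1)" i] by (meson order_trans)
    then have "?S \<ge> t (i - 1)" using G.quantile_ge_iff[of "t (i - 1)" i p] t_pos[of "i - 1"] t_le1[of "i - 1"] i by simp
    then show False using S_le t'_lt[of i] i by simp
  qed
  then show ?thesis using pj ji by simp
qed

lemma opt_ge:
  assumes i: "1 \<le> i" "i \<le> m"
  shows "OPT (mkD (vv i)) \<ge> r0 + \<Delta>"
proof -
  have "xs i \<le> vv i (t' i)" using vv_ge[of i "t' i" i] i by (simp add: tt_def)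
  then have "quantile (mkD (vv i)) (xs i) \<ge> t' i"
    using G.quantile_ge_iff[of "t' i" i "xs i"] t'_pos[of i] tt_le1[of i i] i by (simp add: tt_def)
  then have "rev_price (mkD (vv i)) (xs i) \<ge> xs i * t' i"
    unfolding rev_price_def using xs_pos[of i] i by (simp add: mult_left_mono)
  then have "rev_price (mkD (vv i)) (xs i) \<ge> r0 + \<Delta>" using prod_t'[of i] i by simp
  moreover have "rev_price (mkD (vv i)) (xs i) \<le> OPT (mkD (vv i))"
    unfolding OPT_def
    by (rule cSUP_upper) (use xs_pos[of i] i rev_le in \<open>auto simp: bdd_above_def\<close>)
  ultimately show ?thesis by simp
qed

lemma hit_only:
  assumes "q \<le> 1" "\<not> (t i < q \<and> q \<le> t' i)"
  shows "vv i q = vv 0 q"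
proof -
  have "j \<le> m \<Longrightarrow> (q \<le> tt i j \<longleftrightarrow> q \<le> tt 0 j)" for j
    using assms t_lt_t'[of j] by (auto simp: tt_def)
  then have "{xs j | j. j \<le> m \<and> q \<le> tt i j} = {xs j | j. j \<le> m \<and> q \<le> tt 0 j}"
    by blast
  then show ?thesis by (simp add: vv_def)
qed

lemma hit_unique:
  assumes "1 \<le> i" "i \<le> m" "1 \<le> i'" "i' \<le> m" "t i < q \<and> q \<le> t' i" "t i' < q \<and> q \<le> t' i'"
  shows "i = i'"
proof (rule ccontr)
  assume "i \<noteq> i'"
  then consider "i < i'" | "i' < i" by linarith
  then show False
  proof cases
    case 1
    have "t' i' < t (i' - 1)" using t'_lt assms by simp
    also have "\<dots> \<le> t i" using t_anti[of i "i' - 1"] 1 assms by simp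
    finally show False using assms by simp
  next
    case 2
    have "t' i < t (i - 1)" using t'_lt assms by simp
    also have "\<dots> \<le> t i'" using t_anti[of i' "i - 1"] 2 assms by simp
    finally show False using assms by simp
  qed
qed

end

context bumpfam begin

definition hit :: "nat \<Rightarrow> real \<Rightarrow> bool" where "hit i q \<longleftrightarrow> t i < q \<and> q \<le> t' i"

lemma answers_agree:
  assumes RA: "rand_alg P Qry"
    and nh: "\<And>s. s < k \<Longrightarrow> \<not> hit i (Qry \<omega> (answers Qry (mkD (vv 0)) \<omega> s))"
  shows "tt0 \<le> k \<Longrightarrow> answers Qry (mkD (vv i)) \<omega> tt0 = answers Qry (mkD (vv 0)) \<omega> tt0"
proof (induction tt0)
  case 0 then show ?case by simp
next
  case (Suc s)
  then have IH: "answers Qry (mkD (vv i)) \<omega> s = answers Qry (mkD (vv 0)) \<omega> s" by simp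
  let ?q = "Qry \<omega> (answers Qry (mkD (vv 0)) \<omega> s)"
  have q: "0 < ?q" "?q \<le> 1" using RA unfolding rand_alg_def by auto
  have "vv i ?q = vv 0 ?q" using hit_only[of ?q i] nh[of s] Suc q by (simp add: hit_def)
  then have "value_at (mkD (vv i)) ?q = value_at (mkD (vv 0)) ?q"
    using G.value_at_eq[OF q, of i] G.value_at_eq[OF q, of 0] by simp
  then show ?case using IH by (simp add: Let_def)
qed

lemma pointwise:
  assumes RA: "rand_alg P Qry"
  shows "(\<Sum>i\<in>{1..m}. ennreal (rev_price (mkD (vv i)) (Out \<omega> (answers Qry (mkD (vv i)) \<omega> k))))
          \<le> ennreal (real m * r0 + real (k + 1) * \<Delta>)"
proof -
  let ?I = "{1..m}"
  define base where "base = (\<lambda>s. answers Qry (mkD (vv 0)) \<omega> s)"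
  define qq where "qq = (\<lambda>s. Qry \<omega> (base s))"
  define p0 where "p0 = Out \<omega> (base k)"
  define H where "H = {i \<in> ?I. \<exists>s<k. hit i (qq s)}"
  define G where "G = {i \<in> ?I. rev_price (mkD (vv i)) p0 > r0}"
  have cH: "card H \<le> k"
  proof -
    have "H \<subseteq> (\<Union>s\<in>{..<k}. {i \<in> ?I. hit i (qq s)})" unfolding H_def by auto
    then have "card H \<le> card (\<Union>s\<in>{..<k}. {i \<in> ?I. hit i (qq s)})"
      by (intro card_mono) auto
    also have "\<dots> \<le> (\<Sum>s\<in>{..<k}. card {i \<in> ?I. hit i (qq s)})" by (rule card_UN_le) simp
    also have "\<dots> \<le> (\<Sum>s\<in>{..<k}. 1)"
    proof (intro sum_mono)
      fix s
      have "card {i \<in> ?I. hit i (qq s)} \<le> Suc 0"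
        using hit_unique unfolding hit_def
        by (subst card_le_Suc0_iff_eq) auto
      then show "card {i \<in> ?I. hit i (qq s)} \<le> 1" by simp
    qed
    finally show ?thesis by simp
  qed
  have cG: "card G \<le> 1"
  proof -
    have "a = b" if a: "a \<in> G" and b: "b \<in> G" for a b
    proof (rule ccontr)
      assume "a \<noteq> b"
      then consider "a < b" | "b < a" by linarith
      then show False
      proof cases
        case 1
        have la: "p0 \<le> xs a" using good_loc a unfolding G_def by auto
        have lb: "xs (b - 1) < p0" using good_loc b unfolding G_def by auto
        have "xs a \<le> xs (b - 1)" using xs_mono[of a "b - 1"] 1 b unfolding G_def by auto
        then show False using la lb by simp
      next
        case 2
        have la: "p0 \<le> xs b" using good_loc b unfolding G_def by auto
        have lb: "xs (a - 1) < p0" using good_loc a unfolding G_def by auto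
        have "xs b \<le> xs (a - 1)" using xs_mono[of b "a - 1"] 2 a unfolding G_def by auto
        then show False using la lb by simp
      qed
    qed
    then have "card G \<le> Suc 0" by (subst card_le_Suc0_iff_eq) (auto simp: G_def)
    then show ?thesis by simp
  qed
  define h where "h = (\<lambda>i. if i \<in> H \<union> G then r0 + \<Delta> else r0)"
  have each: "rev_price (mkD (vv i)) (Out \<omega> (answers Qry (mkD (vv i)) \<omega> k)) \<le> h i" if i: "i \<in> ?I" for i
  proof (cases "i \<in> H \<union> G")
    case True then show ?thesis using rev_le by (simp add: h_def)
  next
    case False
    then have nh: "\<And>s. s < k \<Longrightarrow> \<not> hit i (Qry \<omega> (answers Qry (mkD (vv 0)) \<omega> s))"
      using i unfolding H_def qq_def base_def by auto
    have "answers Qry (mkD (vv i)) \<omega> k = base k"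
      using answers_agree[OF RA nh] unfolding base_def by simp
    then show ?thesis using False i unfolding h_def G_def p0_def by auto
  qed
  have "(\<Sum>i\<in>?I. ennreal (rev_price (mkD (vv i)) (Out \<omega> (answers Qry (mkD (vv i)) \<omega> k))))
        \<le> (\<Sum>i\<in>?I. ennreal (h i))"
    using each by (intro sum_mono) (simp add: ennreal_leI)
  also have "\<dots> = ennreal (\<Sum>i\<in>?I. h i)"
    using r0 \<Delta> by (intro sum_ennreal) (simp add: h_def)
  also have "(\<Sum>i\<in>?I. h i) \<le> real m * r0 + real (k + 1) * \<Delta>"
  proof -
    have "(\<Sum>i\<in>?I. h i) = (\<Sum>i\<in>?I. r0 + \<Delta> * (if i \<in> H \<union> G then 1 else 0))"
      by (intro sum.cong) (auto simp: h_def)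
    also have "\<dots> = real m * r0 + \<Delta> * real (card (?I \<inter> (H \<union> G)))"
      by (simp add: sum.distrib sum_distrib_left[symmetric] sum.If_cases Un_def)
    also have "real (card (?I \<inter> (H \<union> G))) \<le> real (k + 1)"
    proof -
      have "card (?I \<inter> (H \<union> G)) \<le> card (H \<union> G)" by (intro card_mono) (auto simp: H_def G_def)
      also have "\<dots> \<le> card H + card G" by (rule card_Un_le)
      finally show ?thesis using cH cG by simp
    qed
    then have "real m * r0 + \<Delta> * real (card (?I \<inter> (H \<union> G))) \<le> real m * r0 + \<Delta> * real (k + 1)"
      using \<Delta> by (intro add_left_mono mult_left_mono) auto
    finally show ?thesis by (simp add: mult.commute)
  qed
  then have "ennreal (\<Sum>i\<in>?I. h i) \<le> ennreal (real m * r0 + real (k + 1) * \<Delta>)" by (rule ennreal_leI)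
  finally show ?thesis .
qed

theorem bump_bound:
  assumes RA: "rand_alg P Qry"
    and guar: "\<And>i. 1 \<le> i \<Longrightarrow> i \<le> m \<Longrightarrow> exp_rev P Qry Out k (mkD (vv i)) \<ge> ennreal T"
    and T: "T \<ge> 0"
  shows "real m * T \<le> real m * r0 + real (k + 1) * \<Delta>"
proof -
  have "real (card {1..m}) * T \<le> real m * r0 + real (k + 1) * \<Delta>"
    by (rule yao[where D = "\<lambda>i. mkD (vv i)" and P = P and Qry = Qry and Out = Out and k = k])
       (use RA guar T pointwise r0 \<Delta> in \<open>auto simp: rand_alg_def\<close>)
  then show ?thesis by simp
qed

end

lemma exp_half_le2: "exp (1/2::real) \<le> 2"
  using exp_bound_lemma[of "1/2::real"] by simp

lemma ln2_ge_half: "ln (2::real) \<ge> 1/2"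
  using exp_half_le2 by (subst ln_ge_iff) auto

lemma pow_le_exp: "(a::real) \<ge> 0 \<Longrightarrow> (1 + a) ^ n \<le> exp (a * real n)"
proof -
  assume a: "a \<ge> 0"
  have "(1 + a) ^ n \<le> exp a ^ n" using a by (intro power_mono) auto
  also have "\<dots> = exp (a * real n)" by (simp add: exp_of_nat_mult[symmetric] mult.commute)
  finally show ?thesis .
qed

lemma part2:
  "\<exists>c>0. \<exists>\<epsilon>0>0. \<forall>\<epsilon>. 0 < \<epsilon> \<and> \<epsilon> < \<epsilon>0 \<longrightarrow>
      (\<forall>P Qry Out k. rand_alg P Qry \<and>
          (\<forall>D. bounded_dist 0 1 D \<longrightarrow> exp_rev P Qry Out k D \<ge> ennreal (OPT D - \<epsilon>))
        \<longrightarrow> real k \<ge> c / \<epsilon>)"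
  apply (rule exI[of _ "1/40"], rule conjI, simp)
  apply (rule exI[of _ "1/100"], rule conjI, simp)
proof (intro allI impI)
  fix \<epsilon> :: real and P Qry Out k
  assume e: "0 < \<epsilon> \<and> \<epsilon> < 1/100"
  assume H: "rand_alg P Qry \<and> (\<forall>D. bounded_dist 0 1 D \<longrightarrow> exp_rev P Qry Out k D \<ge> ennreal (OPT D - \<epsilon>))"
  define m where "m = nat \<lfloor>1 / (10 * \<epsilon>)\<rfloor>"
  define xs where "xs = (\<lambda>j::nat. (1/2) * (1 + 5 * \<epsilon>) ^ j)"
  interpret B: bumpfam m xs "1/2" "2 * \<epsilon>"
  proof
    fix j assume "j < m"
    have "(1/2 + 2 * \<epsilon>) * xs j < (1/2) * (1 + 5 * \<epsilon>) * xs j"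
      using e by (intro mult_strict_right_mono) (auto simp: xs_def)
    then show "(1/2 + 2 * \<epsilon>) * xs j < 1/2 * xs (Suc j)" by (simp add: xs_def algebra_simps)
  qed (use e in \<open>auto simp: xs_def\<close>)
  have mreal: "real m \<ge> 1 / (10 * \<epsilon>) - 1" "real m \<le> 1 / (10 * \<epsilon>)"
    using e unfolding m_def by (auto simp: of_nat_nat)
  have xm: "xs m \<le> 1"
  proof -
    have "(1 + 5 * \<epsilon>) ^ m \<le> exp (5 * \<epsilon> * real m)" using e by (intro pow_le_exp) auto
    also have "\<dots> \<le> exp (1/2)"
    proof -
      have "5 * \<epsilon> * real m \<le> 5 * \<epsilon> * (1 / (10 * \<epsilon>))" using mreal e by (intro mult_left_mono) auto
      also have "\<dots> = 1/2" using e by (simp add: field_simps)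
      finally show ?thesis by simp
    qed
    also have "\<dots> \<le> 2" by (rule exp_half_le2)
    finally show ?thesis by (simp add: xs_def)
  qed
  have bd: "bounded_dist 0 1 (mkD (B.vv i))" for i
    unfolding bounded_dist_def
  proof
    show "val_dist (mkD (B.vv i))" by (rule B.G.val_dist)
    show "measure (mkD (B.vv i)) {0..1} = 1"
    proof (rule B.G.measure_range)
      fix q :: real assume "0 < q" "q \<le> 1"
      then have "xs 0 \<le> B.vv i q \<and> B.vv i q \<le> xs m" using B.vv_range by blast
      then show "0 \<le> B.vv i q \<and> B.vv i q \<le> 1" using xm by (auto simp: xs_def)
    qed
  qed
  have guar: "exp_rev P Qry Out k (mkD (B.vv i)) \<ge> ennreal (1/2 + \<epsilon>)" if "1 \<le> i" "i \<le> m" for i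
  proof -
    have "ennreal (1/2 + \<epsilon>) \<le> ennreal (OPT (mkD (B.vv i)) - \<epsilon>)"
      using B.opt_ge[OF that] by (intro ennreal_leI) simp
    also have "\<dots> \<le> exp_rev P Qry Out k (mkD (B.vv i))" using H bd by blast
    finally show ?thesis .
  qed
  have "real m * (1/2 + \<epsilon>) \<le> real m * (1/2) + real (k + 1) * (2 * \<epsilon>)"
    by (rule B.bump_bound) (use H guar e in auto)
  then have "real m * \<epsilon> \<le> real (k + 1) * (2 * \<epsilon>)" by (simp add: algebra_simps)
  then have "real m \<le> 2 * real (k + 1)" using e by (simp add: mult.commute mult.left_commute)
  then have "1 / (10 * \<epsilon>) - 1 \<le> 2 * real k + 2" using mreal by simp
  then have k: "1 / (20 * \<epsilon>) - 3/2 \<le> real k" by (simp add: field_simps)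
  have "1 / (40 * \<epsilon>) \<le> 1 / (20 * \<epsilon>) - 3/2" using e by (simp add: field_simps)
  then show "1/40 / \<epsilon> \<le> real k" using k by simp
qed

lemma part3:
  "\<exists>c>0. \<exists>\<epsilon>0>0. \<forall>\<epsilon> H. 0 < \<epsilon> \<and> \<epsilon> < \<epsilon>0 \<and> 2 \<le> H \<longrightarrow>
      (\<forall>P Qry Out k. rand_alg P Qry \<and>
          (\<forall>D. bounded_dist 1 H D \<longrightarrow> exp_rev P Qry Out k D \<ge> ennreal ((1 - \<epsilon>) * OPT D))
        \<longrightarrow> real k \<ge> c * ln H / \<epsilon>)"
  apply (rule exI[of _ "1/24"], rule conjI, simp)
  apply (rule exI[of _ "1/100"], rule conjI, simp)
proof (intro allI impI)
  fix \<epsilon> H :: real and P Qry Out k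
  assume e: "0 < \<epsilon> \<and> \<epsilon> < 1/100 \<and> 2 \<le> H"
  assume A: "rand_alg P Qry \<and> (\<forall>D. bounded_dist 1 H D \<longrightarrow> exp_rev P Qry Out k D \<ge> ennreal ((1 - \<epsilon>) * OPT D))"
  have lnH: "ln H \<ge> 1/2" using ln2_ge_half e by (smt (verit) ln_le_cancel_iff)
  define m where "m = nat \<lfloor>ln H / (4 * \<epsilon>)\<rfloor>"
  define xs where "xs = (\<lambda>j::nat. (1 + 4 * \<epsilon>) ^ j)"
  interpret B: bumpfam m xs 1 "3 * \<epsilon>"
  proof
    fix j assume "j < m"
    have "(1 + 3 * \<epsilon>) * xs j < (1 + 4 * \<epsilon>) * xs j"
      using e by (intro mult_strict_right_mono) (auto simp: xs_def)
    then show "(1 + 3 * \<epsilon>) * xs j < 1 * xs (Suc j)" by (simp add: xs_def algebra_simps)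
  qed (use e in \<open>auto simp: xs_def\<close>)
  have mreal: "real m \<ge> ln H / (4 * \<epsilon>) - 1" "real m \<le> ln H / (4 * \<epsilon>)"
    using e lnH unfolding m_def by (auto simp: of_nat_nat)
  have xm: "xs m \<le> H"
  proof -
    have "(1 + 4 * \<epsilon>) ^ m \<le> exp (4 * \<epsilon> * real m)" using e by (intro pow_le_exp) auto
    also have "\<dots> \<le> exp (ln H)"
    proof -
      have "4 * \<epsilon> * real m \<le> 4 * \<epsilon> * (ln H / (4 * \<epsilon>))" using mreal e by (intro mult_left_mono) auto
      also have "\<dots> = ln H" using e by (simp add: field_simps)
      finally show ?thesis by simp
    qed
    also have "\<dots> = H" using e by simp
    finally show ?thesis by (simp add: xs_def)
  qed
  have bd: "bounded_dist 1 H (mkD (B.vv i))" for i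
    unfolding bounded_dist_def
  proof
    show "val_dist (mkD (B.vv i))" by (rule B.G.val_dist)
    show "measure (mkD (B.vv i)) {1..H} = 1"
    proof (rule B.G.measure_range)
      fix q :: real assume "0 < q" "q \<le> 1"
      then have "xs 0 \<le> B.vv i q \<and> B.vv i q \<le> xs m" using B.vv_range by blast
      then show "1 \<le> B.vv i q \<and> B.vv i q \<le> H" using xm by (auto simp: xs_def)
    qed
  qed
  have guar: "exp_rev P Qry Out k (mkD (B.vv i)) \<ge> ennreal ((1 - \<epsilon>) * (1 + 3 * \<epsilon>))" if "1 \<le> i" "i \<le> m" for i
  proof -
    have "ennreal ((1 - \<epsilon>) * (1 + 3 * \<epsilon>)) \<le> ennreal ((1 - \<epsilon>) * OPT (mkD (B.vv i)))"
      using B.opt_ge[OF that] e by (intro ennreal_leI mult_left_mono) auto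
    also have "\<dots> \<le> exp_rev P Qry Out k (mkD (B.vv i))" using A bd by blast
    finally show ?thesis .
  qed
  have "real m * ((1 - \<epsilon>) * (1 + 3 * \<epsilon>)) \<le> real m * 1 + real (k + 1) * (3 * \<epsilon>)"
    by (rule B.bump_bound) (use A guar e in auto)
  then have "real m * (\<epsilon> * (2 - 3 * \<epsilon>)) \<le> real (k + 1) * (3 * \<epsilon>)" by (simp add: algebra_simps)
  then have "real m * (2 - 3 * \<epsilon>) \<le> 3 * real (k + 1)" using e by (simp add: mult.commute mult.left_commute)
  moreover have "real m * 1 \<le> real m * (2 - 3 * \<epsilon>)" using e by (intro mult_left_mono) auto
  ultimately have "real m \<le> 3 * real (k + 1)" by simp
  then have "ln H / (4 * \<epsilon>) - 1 \<le> 3 * real k + 3" using mreal by simp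
  then have k: "ln H / (12 * \<epsilon>) - 4/3 \<le> real k" by (simp add: field_simps)
  have "4/3 \<le> ln H / (24 * \<epsilon>)" using e lnH by (simp add: field_simps)
  then have "ln H / (24 * \<epsilon>) \<le> ln H / (12 * \<epsilon>) - 4/3" by (simp add: field_simps)
  then show "1/24 * ln H / \<epsilon> \<le> real k" using k by simp
qed

lemma DC_lin: "(a::real) \<ge> 0 \<Longrightarrow> DC (\<lambda>q. x * q \<le> a + b * q)"
proof -
  assume a: "a \<ge> 0"
  show ?thesis
  proof (cases "x \<le> b")
    case True
    have "x * q \<le> a + b * q" if "0 < q" for q
    proof -
      have "x * q \<le> b * q" using True that by (simp add: mult_right_mono)
      then show ?thesis using a by simp
    qed
    then show ?thesis unfolding DC_def by (intro exI[of _ 1]) auto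
  next
    case False
    define S where "S = min 1 (a / (x - b))"
    have "0 \<le> S" "S \<le> 1" using a False by (auto simp: S_def)
    moreover have "(x * q \<le> a + b * q) \<longleftrightarrow> q \<le> S" if "0 < q" "q \<le> 1" for q
    proof -
      have "(x * q \<le> a + b * q) \<longleftrightarrow> (x - b) * q \<le> a" by (simp add: algebra_simps)
      also have "\<dots> \<longleftrightarrow> q \<le> a / (x - b)" using False by (simp add: field_simps mult.commute)
      finally show ?thesis using that by (auto simp: S_def)
    qed
    ultimately show ?thesis unfolding DC_def by blast
  qed
qed

lemma DC_conj: "DC P \<Longrightarrow> DC Q \<Longrightarrow> DC (\<lambda>q. P q \<and> Q q)"
proof -
  assume "DC P" "DC Q"
  then obtain S1 S2 where S: "0 \<le> S1" "S1 \<le> 1" "\<forall>q. 0 < q \<and> q \<le> 1 \<longrightarrow> (P q \<longleftrightarrow> q \<le> S1)"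
    "0 \<le> S2" "S2 \<le> 1" "\<forall>q. 0 < q \<and> q \<le> 1 \<longrightarrow> (Q q \<longleftrightarrow> q \<le> S2)"
    unfolding DC_def by blast
  show ?thesis unfolding DC_def using S by (intro exI[of _ "min S1 S2"]) auto
qed

lemma DC_true: "DC (\<lambda>q. True)"
  unfolding DC_def by (intro exI[of _ 1]) auto

lemma DC_all: "(\<And>d. d \<le> (n::nat) \<Longrightarrow> DC (P d)) \<Longrightarrow> DC (\<lambda>q. \<forall>d\<le>n. P d q)"
proof (induction n)
  case 0
  then have "DC (P 0)" by simp
  moreover have "(\<lambda>q. \<forall>d\<le>0. P d q) = P 0" by auto
  ultimately show ?case by simp
next
  case (Suc n)
  have "DC (\<lambda>q. (\<forall>d\<le>n. P d q) \<and> P (Suc n) q)" using Suc by (intro DC_conj) auto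
  moreover have "(\<lambda>q. \<forall>d\<le>Suc n. P d q) = (\<lambda>q. (\<forall>d\<le>n. P d q) \<and> P (Suc n) q)"
    by (auto simp: le_Suc_eq)
  ultimately show ?case by simp
qed

locale hier =
  fixes n :: nat
begin

definition ell :: "nat \<Rightarrow> real" where "ell d = 1 / 2 ^ Suc d"
definition sig :: "nat \<Rightarrow> real" where "sig d = 1 / 4 ^ d"
definition cc :: "nat \<Rightarrow> nat \<Rightarrow> nat" where "cc d i = i div 2 ^ (n - d)"
definition AA :: "nat \<Rightarrow> nat \<Rightarrow> real" where "AA d c = 1/4 + real c * ell d"
definition BB :: "nat \<Rightarrow> nat \<Rightarrow> real" where "BB d c = AA d c + ell d"
definition dl :: "nat \<Rightarrow> nat \<Rightarrow> real \<Rightarrow> real" where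
  "dl d c q = max 0 (max (AA d c - q) (q - BB d c))"
definition gf :: "nat \<Rightarrow> nat \<Rightarrow> real \<Rightarrow> real" where "gf d c q = 1 - sig d * dl d c q"
definition RR :: "nat \<Rightarrow> real \<Rightarrow> real" where "RR i q = Min ((\<lambda>d. gf d (cc d i) q) ` {..n})"
definition vv :: "nat \<Rightarrow> real \<Rightarrow> real" where "vv i q = RR i q / q"

lemma ell_pos: "ell d > 0" by (simp add: ell_def)
lemma sig_pos: "sig d > 0" by (simp add: sig_def)
lemma sig_le1: "sig d \<le> 1" by (simp add: sig_def)
lemma dl_nonneg: "dl d c q \<ge> 0" by (simp add: dl_def)
lemma gf_le1: "gf d c q \<le> 1" using sig_pos[of d] dl_nonneg[of d c q] by (simp add: gf_def)

lemma cc_lt: "i < 2 ^ n \<Longrightarrow> d \<le> n \<Longrightarrow> cc d i < 2 ^ d"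
proof -
  assume i: "i < 2 ^ n" and d: "d \<le> n"
  have "(2::nat) ^ n = 2 ^ d * 2 ^ (n - d)" using d by (simp add: power_add[symmetric])
  then show ?thesis using i unfolding cc_def by (simp add: div_less_iff_less_mult)
qed

lemma BB_le: "c < 2 ^ d \<Longrightarrow> BB d c \<le> 3/4"
proof -
  assume c: "c < 2 ^ d"
  then have "real c + 1 \<le> 2 ^ d"
    by (metis Suc_leI of_nat_Suc of_nat_le_iff of_nat_numeral of_nat_power add.commute)
  then have "(real c + 1) / 2 ^ Suc d \<le> 2 ^ d / 2 ^ Suc d" by (intro divide_right_mono) auto
  then show ?thesis by (simp add: BB_def AA_def ell_def field_simps)
qed

lemma AA_ge: "AA d c \<ge> 1/4" using ell_pos[of d] by (simp add: AA_def)

lemma cc_div: "d \<le> d' \<Longrightarrow> d' \<le> n \<Longrightarrow> cc d i = cc d' i div 2 ^ (d' - d)"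
proof -
  assume "d \<le> d'" "d' \<le> n"
  then have "n - d = (n - d') + (d' - d)" by simp
  then show ?thesis unfolding cc_def by (simp add: power_add div_mult2_eq)
qed

lemma nest:
  assumes "d \<le> d'" "d' \<le> n"
  shows "AA d (cc d i) \<le> AA d' (cc d' i) \<and> BB d' (cc d' i) \<le> BB d (cc d i)"
proof -
  define e where "e = d' - d"
  define c' where "c' = cc d' i"
  define X where "X = c' div 2 ^ e"
  have c: "cc d i = X" unfolding X_def c'_def e_def using cc_div assms by simp
  have pw: "(2::real) ^ Suc d' = 2 ^ Suc d * 2 ^ e" unfolding e_def using assms
    by (simp add: power_add[symmetric])
  have l1: "X * 2 ^ e \<le> c'" unfolding X_def by simp
  have l2: "c' + 1 \<le> (X + 1) * 2 ^ e"
  proof -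
    have m1: "c' mod 2 ^ e < 2 ^ e" by simp
    have m2: "c' = X * 2 ^ e + c' mod 2 ^ e" unfolding X_def by (rule div_mult_mod_eq[symmetric])
    have m3: "(X + 1) * 2 ^ e = X * 2 ^ e + 2 ^ e" by (simp add: algebra_simps)
    show ?thesis using m1 m2 m3 by linarith
  qed
  have r1: "real X * 2 ^ e \<le> real c'"
  proof -
    have "real (X * 2 ^ e) \<le> real c'" using l1 by (simp only: of_nat_le_iff)
    then show ?thesis by simp
  qed
  have r2: "real c' + 1 \<le> (real X + 1) * 2 ^ e"
  proof -
    have "real (c' + 1) \<le> real ((X + 1) * 2 ^ e)" using l2 by (simp only: of_nat_le_iff)
    then show ?thesis by (simp add: algebra_simps)
  qed
  have p0: "(0::real) < 2 ^ Suc d" "(0::real) < 2 ^ e" by simp_all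
  have s1: "real X / 2 ^ Suc d \<le> real c' / 2 ^ Suc d'"
  proof -
    have "real X / 2 ^ Suc d = (real X * 2 ^ e) / 2 ^ Suc d'" unfolding pw using p0 by simp
    also have "\<dots> \<le> real c' / 2 ^ Suc d'" using r1 by (intro divide_right_mono) auto
    finally show ?thesis .
  qed
  have s2: "(real c' + 1) / 2 ^ Suc d' \<le> (real X + 1) / 2 ^ Suc d"
  proof -
    have "(real c' + 1) / 2 ^ Suc d' \<le> ((real X + 1) * 2 ^ e) / 2 ^ Suc d'"
      using r2 by (intro divide_right_mono) auto
    also have "\<dots> = (real X + 1) / 2 ^ Suc d" unfolding pw using p0 by simp
    finally show ?thesis .
  qed
  have e1: "AA d (cc d i) = 1/4 + real X / 2 ^ Suc d" unfolding c AA_def ell_def by simp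
  have e2: "AA d' (cc d' i) = 1/4 + real c' / 2 ^ Suc d'" unfolding c'_def AA_def ell_def by simp
  have e3: "BB d (cc d i) = 1/4 + (real X + 1) / 2 ^ Suc d"
    unfolding c BB_def AA_def ell_def by (simp add: add_divide_distrib)
  have e4: "BB d' (cc d' i) = 1/4 + (real c' + 1) / 2 ^ Suc d'"
    unfolding c'_def BB_def AA_def ell_def by (simp add: add_divide_distrib)
  show ?thesis using s1 s2 e1 e2 e3 e4 by simp
qed

lemma ell_step: "d < d' \<Longrightarrow> sig d' \<le> sig d / 4"
proof -
  assume "d < d'"
  then have "(4::real) ^ Suc d \<le> 4 ^ d'" by (intro power_increasing) auto
  then show ?thesis unfolding sig_def by (simp add: field_simps)
qed

lemma BB_AA: "BB d c - AA d c = ell d" by (simp add: BB_def)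

lemma deeper_ge:
  assumes d: "d \<le> d'" "d' \<le> n" and far: "dl d (cc d i) q \<ge> ell d / 3"
  shows "gf d' (cc d' i) q \<ge> gf d (cc d i) q"
proof (cases "d = d'")
  case True then show ?thesis by simp
next
  case False
  then have lt: "d < d'" using d by simp
  have ns: "AA d (cc d i) \<le> AA d' (cc d' i)" "BB d' (cc d' i) \<le> BB d (cc d i)" using nest[OF d] by auto
  have "AA d' (cc d' i) \<le> BB d' (cc d' i)" using ell_pos[of d'] by (simp add: BB_def)
  then have "dl d' (cc d' i) q \<le> dl d (cc d i) q + ell d"
    using ns BB_AA[of d "cc d i"] unfolding dl_def by (auto simp: max_def)
  also have "\<dots> \<le> 4 * dl d (cc d i) q" using far by simp
  finally have dd: "dl d' (cc d' i) q \<le> 4 * dl d (cc d i) q" .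
  have "sig d' * dl d' (cc d' i) q \<le> (sig d / 4) * (4 * dl d (cc d i) q)"
    using ell_step[OF lt] dd sig_pos[of d'] sig_pos[of d] dl_nonneg[of d' "cc d' i" q] by (intro mult_mono) auto
  then show ?thesis unfolding gf_def by simp
qed

lemma RR_far:
  assumes d: "d \<le> n" and far: "dl d (cc d i) q \<ge> ell d / 3"
  shows "RR i q = Min ((\<lambda>d'. gf d' (cc d' i) q) ` {..d})"
proof -
  have fin: "finite ((\<lambda>d'. gf d' (cc d' i) q) ` {..n})" by simp
  have sub: "(\<lambda>d'. gf d' (cc d' i) q) ` {..d} \<subseteq> (\<lambda>d'. gf d' (cc d' i) q) ` {..n}" using d by auto
  show ?thesis unfolding RR_def
  proof (rule antisym)
    show "Min ((\<lambda>d. gf d (cc d i) q) ` {..n}) \<le> Min ((\<lambda>d'. gf d' (cc d' i) q) ` {..d})"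
      by (rule Min_antimono[OF sub]) auto
    have "Min ((\<lambda>d'. gf d' (cc d' i) q) ` {..d}) \<le> gf d' (cc d' i) q" if "d' \<le> n" for d'
    proof (cases "d' \<le> d")
      case True then show ?thesis by (intro Min_le) auto
    next
      case False
      have "Min ((\<lambda>d'. gf d' (cc d' i) q) ` {..d}) \<le> gf d (cc d i) q" by (intro Min_le) auto
      also have "\<dots> \<le> gf d' (cc d' i) q" using False that far by (intro deeper_ge) auto
      finally show ?thesis .
    qed
    then show "Min ((\<lambda>d'. gf d' (cc d' i) q) ` {..d}) \<le> Min ((\<lambda>d. gf d (cc d i) q) ` {..n})"
      by (subst Min_ge_iff) auto
  qed
qed

end

lemma max3_iff: "s > 0 \<Longrightarrow> (y \<le> 1 - s * max 0 (max a b)) \<longleftrightarrow> (y \<le> 1 \<and> y \<le> 1 - s * a \<and> y \<le> 1 - s * (b::real))"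
proof -
  assume s: "s > 0"
  define M where "M = max 0 (max a b)"
  have M: "M = 0 \<or> M = a \<or> M = b" "0 \<le> M" "a \<le> M" "b \<le> M" unfolding M_def by auto
  have "s * a \<le> s * M" "s * b \<le> s * M" "0 \<le> s * M" using M s by (auto intro: mult_left_mono)
  then show ?thesis using M(1) unfolding M_def[symmetric] by auto
qed

context hier begin

lemma RR_le_gf: "d \<le> n \<Longrightarrow> RR i q \<le> gf d (cc d i) q"
  unfolding RR_def by (intro Min_le) auto

lemma RR_le1: "RR i q \<le> 1"
  using RR_le_gf[of 0 i q] gf_le1 by (meson le0 order_trans)

lemma RR_ge_iff: "y \<le> RR i q \<longleftrightarrow> (\<forall>d\<le>n. y \<le> gf d (cc d i) q)"
  unfolding RR_def by (subst Min_ge_iff) auto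

lemma AA_le: "c < 2 ^ d \<Longrightarrow> AA d c \<le> 3/4"
  using BB_le[of c d] ell_pos[of d] by (simp add: BB_def)

lemma gf_nonneg:
  assumes "c < 2 ^ d" "0 \<le> q" "q \<le> 1"
  shows "gf d c q \<ge> 0"
proof -
  have "dl d c q \<le> 1" using AA_le[OF assms(1)] AA_ge[of d c] ell_pos[of d] assms unfolding dl_def BB_def
    by auto
  then have "sig d * dl d c q \<le> 1 * 1" using sig_le1[of d] sig_pos[of d] dl_nonneg[of d c q]
    by (intro mult_mono) auto
  then show ?thesis by (simp add: gf_def)
qed

lemma RR_nonneg: "i < 2 ^ n \<Longrightarrow> 0 \<le> q \<Longrightarrow> q \<le> 1 \<Longrightarrow> RR i q \<ge> 0"
  using gf_nonneg cc_lt by (subst RR_ge_iff) auto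

lemma gd: assumes i: "i < 2 ^ n" shows "gdist (vv i)"
proof
  fix x
  have eq: "(x \<le> vv i q) \<longleftrightarrow> (\<forall>d\<le>n. x * q \<le> 1 + 0 * q \<and> x * q \<le> (1 - sig d * AA d (cc d i)) + sig d * q
                 \<and> x * q \<le> (1 + sig d * BB d (cc d i)) + (- sig d) * q)"
    if q: "0 < q" "q \<le> 1" for q
  proof -
    have "(x \<le> vv i q) \<longleftrightarrow> x * q \<le> RR i q" using q by (simp add: vv_def pos_le_divide_eq)
    also have "\<dots> \<longleftrightarrow> (\<forall>d\<le>n. x * q \<le> gf d (cc d i) q)" by (rule RR_ge_iff)
    also have "\<dots> \<longleftrightarrow> (\<forall>d\<le>n. x * q \<le> 1 + 0 * q \<and> x * q \<le> (1 - sig d * AA d (cc d i)) + sig d * q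
                 \<and> x * q \<le> (1 + sig d * BB d (cc d i)) + (- sig d) * q)"
      unfolding gf_def dl_def using max3_iff[OF sig_pos] by (simp add: algebra_simps)
    finally show ?thesis .
  qed
  have "DC (\<lambda>q. \<forall>d\<le>n. x * q \<le> 1 + 0 * q \<and> x * q \<le> (1 - sig d * AA d (cc d i)) + sig d * q
                 \<and> x * q \<le> (1 + sig d * BB d (cc d i)) + (- sig d) * q)"
  proof (intro DC_all DC_conj DC_lin)
    fix d assume d: "d \<le> n"
    show "(0::real) \<le> 1" by simp
    have "sig d * AA d (cc d i) \<le> 1 * 1" using sig_le1[of d] sig_pos[of d] AA_le[OF cc_lt[OF i d]] AA_ge[of d "cc d i"]
      by (intro mult_mono) auto
    then show "0 \<le> 1 - sig d * AA d (cc d i)" by simp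
    have "0 \<le> sig d * BB d (cc d i)" using sig_pos[of d] AA_ge[of d "cc d i"] ell_pos[of d] by (simp add: BB_def)
    then show "0 \<le> 1 + sig d * BB d (cc d i)" by simp
  qed
  then show "DC (\<lambda>q. x \<le> vv i q)" using eq unfolding DC_def by auto
next
  fix q :: real assume "0 < q" "q \<le> 1"
  then show "0 \<le> vv i q" using RR_nonneg[OF i] by (simp add: vv_def)
qed

lemma dl_convex:
  assumes "u \<ge> 0" "w \<ge> 0" "u + w = 1"
  shows "dl d c (u * x + w * y) \<le> u * dl d c x + w * dl d c y"
proof -
  let ?A = "AA d c" and ?B = "BB d c"
  have w: "w = 1 - u" using assms by simp
  have h1: "?A - (u * x + w * y) = u * (?A - x) + w * (?A - y)" unfolding w by (simp add: algebra_simps)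
  have h2: "(u * x + w * y) - ?B = u * (x - ?B) + w * (y - ?B)" unfolding w by (simp add: algebra_simps)
  have a1: "u * (?A - x) \<le> u * dl d c x" "w * (?A - y) \<le> w * dl d c y"
    "u * (x - ?B) \<le> u * dl d c x" "w * (y - ?B) \<le> w * dl d c y"
    "0 \<le> u * dl d c x" "0 \<le> w * dl d c y"
    using assms unfolding dl_def by (auto intro!: mult_left_mono)
  show ?thesis unfolding dl_def[of d c "u * x + w * y"] using h1 h2 a1
    by (simp add: dl_def[symmetric])
qed

lemma RR_conc:
  assumes uw: "0 \<le> u" "0 \<le> w" "u + w = 1"
  shows "u * RR i x + w * RR i y \<le> RR i (u * x + w * y)"
proof (subst RR_ge_iff, intro allI impI)
  fix d assume d: "d \<le> n"
  have "u * RR i x + w * RR i y \<le> u * gf d (cc d i) x + w * gf d (cc d i) y"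
    using RR_le_gf[OF d] uw by (intro add_mono mult_left_mono) auto
  also have "\<dots> = 1 - sig d * (u * dl d (cc d i) x + w * dl d (cc d i) y)"
    using uw by (simp add: gf_def algebra_simps)
  also have "\<dots> \<le> 1 - sig d * dl d (cc d i) (u * x + w * y)"
    using dl_convex[OF uw] sig_pos[of d] by (simp add: mult_left_mono)
  finally show "u * RR i x + w * RR i y \<le> gf d (cc d i) (u * x + w * y)"
    by (simp add: gf_def)
qed

lemma regular: assumes i: "i < 2 ^ n" shows "regular_dist (mkD (vv i))"
proof -
  interpret G: gdist "vv i" by (rule gd[OF i])
  have rc: "rev_curve (mkD (vv i)) q = RR i q" if "q \<in> {0<..1}" for q
    using that G.value_at_eq[of q] by (simp add: rev_curve_def vv_def)
  have "concave_on {0<..1} (rev_curve (mkD (vv i)))"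
  proof (subst concave_on_iff, intro conjI ballI allI impI)
    show "convex {0<..(1::real)}" by (rule convex_real_interval)
  next
    fix x y u w :: real
    assume xy: "x \<in> {0<..1}" "y \<in> {0<..1}" and uw: "0 \<le> u" "0 \<le> w" "u + w = 1"
    have z1: "0 < u * x + w * y"
    proof -
      have "u * min x y + w * min x y \<le> u * x + w * y"
        using uw by (intro add_mono mult_left_mono) auto
      moreover have "u * min x y + w * min x y = min x y"
        using uw by (metis distrib_right mult_1)
      moreover have "min x y > 0" using xy by auto
      ultimately show ?thesis by linarith
    qed
    have z2: "u * x + w * y \<le> 1"
    proof -
      have "u * x + w * y \<le> u * 1 + w * 1" using uw xy by (intro add_mono mult_left_mono) auto
      then show ?thesis using uw by simp
    qed
    have z: "u *\<^sub>R x + w *\<^sub>R y \<in> {0<..1}" using z1 z2 by simp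
    have "u * RR i x + w * RR i y \<le> RR i (u *\<^sub>R x + w *\<^sub>R y)"
      using RR_conc[OF uw] by simp
    then show "u * rev_curve (mkD (vv i)) x + w * rev_curve (mkD (vv i)) y
        \<le> rev_curve (mkD (vv i)) (u *\<^sub>R x + w *\<^sub>R y)"
      using rc[OF xy(1)] rc[OF xy(2)] rc[OF z] by simp
  qed
  then show ?thesis unfolding regular_dist_def using G.val_dist by simp
qed

lemma rev_le1: assumes i: "i < 2 ^ n" shows "rev_price (mkD (vv i)) p \<le> 1"
proof -
  interpret G: gdist "vv i" by (rule gd[OF i])
  let ?S = "quantile (mkD (vv i)) p"
  show ?thesis
  proof (cases "p > 0 \<and> ?S > 0")
    case True
    then have "rev_price (mkD (vv i)) p \<le> ?S * vv i ?S" using G.rev_le_curve by simp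
    also have "\<dots> = RR i ?S" using True by (simp add: vv_def)
    also have "\<dots> \<le> 1" by (rule RR_le1)
    finally show ?thesis .
  next
    case False
    then have "rev_price (mkD (vv i)) p \<le> 0"
      using G.quantile_nonneg[of p] unfolding rev_price_def
      by (auto simp: mult_nonpos_nonneg)
    then show ?thesis by simp
  qed
qed

lemma RR_top: assumes i: "i < 2 ^ n" shows "RR i (AA n i) = 1"
proof -
  have cn: "cc n i = i" by (simp add: cc_def)
  have "dl d (cc d i) (AA n i) = 0" if d: "d \<le> n" for d
  proof -
    have "AA d (cc d i) \<le> AA n (cc n i)" "BB n (cc n i) \<le> BB d (cc d i)" using nest[OF d] by auto
    moreover have "AA n i \<le> BB n i" using ell_pos[of n] by (simp add: BB_def)
    ultimately show ?thesis unfolding dl_def cn by auto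
  qed
  then have "\<forall>d\<le>n. 1 \<le> gf d (cc d i) (AA n i)" by (simp add: gf_def)
  then have "1 \<le> RR i (AA n i)" by (subst RR_ge_iff)
  then show ?thesis using RR_le1[of i "AA n i"] by simp
qed

lemma opt_ge1: assumes i: "i < 2 ^ n" shows "OPT (mkD (vv i)) \<ge> 1"
proof -
  interpret G: gdist "vv i" by (rule gd[OF i])
  let ?q = "AA n i"
  have q: "0 < ?q" "?q \<le> 1" using AA_ge[of n i] AA_le[of i n] i by auto
  have "rev_price (mkD (vv i)) (vv i ?q) \<ge> ?q * vv i ?q" by (rule G.rev_ge_curve[OF q])
  also have "?q * vv i ?q = 1" using RR_top[OF i] q by (simp add: vv_def)
  finally have r: "rev_price (mkD (vv i)) (vv i ?q) \<ge> 1" .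
  have "rev_price (mkD (vv i)) (vv i ?q) \<le> OPT (mkD (vv i))"
    unfolding OPT_def
    by (rule cSUP_upper) (use G.nonneg[OF q] rev_le1[OF i] in \<open>auto simp: bdd_above_def\<close>)
  then show ?thesis using r by simp
qed

end

lemma card_window:
  assumes "\<And>i. i \<in> X \<Longrightarrow> a < real i \<and> real i < a + 2"
  shows "card X \<le> 2"
proof -
  have "X \<subseteq> {nat (\<lfloor>a\<rfloor> + 1), nat (\<lfloor>a\<rfloor> + 2)}"
  proof
    fix i assume i: "i \<in> X"
    then have h: "a < real i" "real i < a + 2" using assms by auto
    have "\<lfloor>a\<rfloor> < int i" using h(1) by linarith
    moreover have "int i < \<lfloor>a\<rfloor> + 3" using h(2) by linarith
    ultimately have "int i = \<lfloor>a\<rfloor> + 1 \<or> int i = \<lfloor>a\<rfloor> + 2" by linarith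
    then show "i \<in> {nat (\<lfloor>a\<rfloor> + 1), nat (\<lfloor>a\<rfloor> + 2)}" by auto
  qed
  then have "card X \<le> card {nat (\<lfloor>a\<rfloor> + 1), nat (\<lfloor>a\<rfloor> + 2)}" by (intro card_mono) auto
  also have "\<dots> \<le> 2" by (simp add: card_insert_le_m1)
  finally show ?thesis .
qed

context hier begin

lemma dl_lip: "dl d c y \<le> dl d c s + \<bar>y - s\<bar>"
  unfolding dl_def by (auto simp: max_def abs_if)

lemma good_dl:
  assumes i: "i < 2 ^ n" and eps: "0 < \<epsilon>" "\<epsilon> \<le> 1/8"
    and g: "rev_price (mkD (vv i)) p > 1 - 2 * \<epsilon>"
  shows "p > 0 \<and> dl n i (1 / p) < 2 * \<epsilon> * 4 ^ n + 4 * \<epsilon>"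
proof -
  interpret G: gdist "vv i" by (rule gd[OF i])
  let ?S = "quantile (mkD (vv i)) p"
  have pS: "p > 0 \<and> ?S > 0"
  proof (rule ccontr)
    assume "\<not> (p > 0 \<and> ?S > 0)"
    then have "rev_price (mkD (vv i)) p \<le> 0"
      using G.quantile_nonneg[of p] unfolding rev_price_def
      by (auto simp: mult_nonpos_nonneg)
    then show False using g eps by simp
  qed
  have S1: "?S \<le> 1" by (rule G.quantile_le1)
  have "rev_price (mkD (vv i)) p \<le> ?S * vv i ?S" using G.rev_le_curve pS by simp
  also have "\<dots> = RR i ?S" using pS by (simp add: vv_def)
  finally have rR: "p * ?S \<le> RR i ?S" by (simp add: rev_price_def)
  have gpS: "p * ?S > 1 - 2 * \<epsilon>" using g by (simp add: rev_price_def)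
  have "RR i ?S \<le> gf n (cc n i) ?S" by (rule RR_le_gf) simp
  then have "RR i ?S \<le> 1 - sig n * dl n i ?S" by (simp add: gf_def cc_def)
  then have "sig n * dl n i ?S < 2 * \<epsilon>" using rR gpS by simp
  then have dS: "dl n i ?S < 2 * \<epsilon> * 4 ^ n" by (simp add: sig_def field_simps)
  define y where "y = 1 / p"
  have y: "y > 0" "p * y = 1" using pS by (auto simp: y_def)
  have "p * ?S \<le> 1" using rR RR_le1[of i ?S] by simp
  then have Sy: "?S \<le> y" using pS unfolding y_def by (simp add: field_simps)
  have "(1 - 2 * \<epsilon>) * y < ?S"
  proof -
    have "(1 - 2 * \<epsilon>) * y = (1 - 2 * \<epsilon>) / p" by (simp add: y_def)
    also have "\<dots> < ?S" using gpS pS by (simp add: field_simps mult.commute)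
    finally show ?thesis .
  qed
  moreover have "(1/2) * y \<le> (1 - 2 * \<epsilon>) * y" using eps y by (intro mult_right_mono) auto
  ultimately have ylt: "y < 2" using S1 by linarith
  have "y - ?S < 2 * \<epsilon> * y" using \<open>(1 - 2 * \<epsilon>) * y < ?S\<close> by (simp add: algebra_simps)
  also have "\<dots> \<le> 2 * \<epsilon> * 2" using ylt eps by (intro mult_left_mono) auto
  finally have yS: "\<bar>y - ?S\<bar> < 4 * \<epsilon>" using Sy by simp
  have "dl n i y \<le> dl n i ?S + \<bar>y - ?S\<bar>" by (rule dl_lip)
  then show ?thesis using dS yS pS unfolding y_def by simp
qed

lemma good_count:
  assumes eps: "0 < \<epsilon>" "\<epsilon> \<le> 1/8" and small: "24 * \<epsilon> * 8 ^ n \<le> 1"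
  shows "card {i. i < 2 ^ n \<and> rev_price (mkD (vv i)) p > 1 - 2 * \<epsilon>} \<le> 2"
proof (rule card_window)
  define \<delta> where "\<delta> = 2 * \<epsilon> * 4 ^ n + 4 * \<epsilon>"
  define z where "z = (1 / p - 1/4) / ell n"
  have ln: "ell n = 1 / (2 * 2 ^ n)" by (simp add: ell_def)
  have d1: "\<delta> \<le> 6 * \<epsilon> * 4 ^ n"
  proof -
    have "(1::real) \<le> 4 ^ n" by simp
    then have "4 * \<epsilon> \<le> 4 * \<epsilon> * 4 ^ n" using eps by simp
    then show ?thesis by (simp add: \<delta>_def)
  qed
  have d2: "\<delta> / ell n \<le> 1/2"
  proof -
    have "(4::real) ^ n * 2 ^ n = (4 * 2) ^ n" by (simp only: power_mult_distrib)
    then have "(8::real) ^ n = 4 ^ n * 2 ^ n" by simp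
    have "\<delta> / ell n = \<delta> * (2 * 2 ^ n)" by (simp add: ln)
    also have "\<dots> \<le> 6 * \<epsilon> * 4 ^ n * (2 * 2 ^ n)" using d1 by (intro mult_right_mono) auto
    also have "\<dots> = 12 * \<epsilon> * 8 ^ n" using \<open>(8::real) ^ n = 4 ^ n * 2 ^ n\<close> by simp
    also have "\<dots> \<le> 1/2" using small by simp
    finally show ?thesis .
  qed
  fix i assume "i \<in> {i. i < 2 ^ n \<and> rev_price (mkD (vv i)) p > 1 - 2 * \<epsilon>}"
  then have i: "i < 2 ^ n" and g: "rev_price (mkD (vv i)) p > 1 - 2 * \<epsilon>" by auto
  have gd: "p > 0" "dl n i (1 / p) < \<delta>" using good_dl[OF i eps g] unfolding \<delta>_def by auto
  have e1: "AA n i - 1 / p < \<delta>" "1 / p - BB n i < \<delta>" using gd(2) unfolding dl_def by auto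
  have e2: "AA n i = 1/4 + real i * ell n" "BB n i = 1/4 + real i * ell n + ell n"
    by (simp_all add: AA_def BB_def)
  have lp: "ell n > 0" by (rule ell_pos)
  have "real i * ell n < (1 / p - 1/4) + \<delta>" using e1 e2 by simp
  then have "real i < ((1 / p - 1/4) + \<delta>) / ell n" using lp by (simp add: pos_less_divide_eq)
  then have u: "real i < z + \<delta> / ell n" unfolding z_def using lp by (simp add: add_divide_distrib)
  have "(1 / p - 1/4) - \<delta> - ell n < real i * ell n" using e1 e2 by simp
  then have "((1 / p - 1/4) - \<delta> - ell n) / ell n < real i" using lp by (simp add: pos_divide_less_eq)
  then have l: "z - \<delta> / ell n - 1 < real i" unfolding z_def using lp by (simp add: diff_divide_distrib)
  show "z - \<delta> / ell n - 1 < real i \<and> real i < z - \<delta> / ell n - 1 + 2"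
    using u l d2 by linarith
qed

end

lemma geo32: "L \<le> n \<Longrightarrow> (\<Sum>d\<in>{Suc L..n}. (3/2::real) ^ (n - d)) \<le> 2 * (3/2) ^ (n - L)"
proof (induction "n - L" arbitrary: L)
  case 0
  then have "{Suc L..n} = {}" by auto
  then show ?case by simp
next
  case (Suc m)
  then have L: "Suc L \<le> n" "m = n - Suc L" by auto
  have eq: "{Suc L..n} = insert (Suc L) {Suc (Suc L)..n}" using L by auto
  have "(\<Sum>d\<in>{Suc L..n}. (3/2::real) ^ (n - d)) = (3/2) ^ (n - Suc L) + (\<Sum>d\<in>{Suc (Suc L)..n}. (3/2::real) ^ (n - d))"
    unfolding eq by simp
  also have "\<dots> \<le> (3/2) ^ (n - Suc L) + 2 * (3/2) ^ (n - Suc L)"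
    using Suc.hyps(1)[of "Suc L"] L by simp
  also have "\<dots> = 2 * (3/2) ^ (n - L)"
  proof -
    have "n - L = Suc (n - Suc L)" using L by simp
    then show ?thesis by simp
  qed
  finally show ?case .
qed

locale hcount = hier +
  fixes Qry :: "real \<Rightarrow> real list \<Rightarrow> real" and Out :: "real \<Rightarrow> real list \<Rightarrow> real"
    and \<omega> :: real and k :: nat and \<epsilon> :: real
  assumes RA: "\<And>w as. Qry w as \<in> {0<..1}"
    and eps: "0 < \<epsilon>" "\<epsilon> \<le> 1/8" and small: "24 * \<epsilon> * 8 ^ n \<le> 1"
begin

definition ans :: "nat \<Rightarrow> nat \<Rightarrow> real list" where "ans i s = answers Qry (mkD (vv i)) \<omega> s"
definition good :: "nat \<Rightarrow> bool" where
  "good i \<longleftrightarrow> rev_price (mkD (vv i)) (Out \<omega> (ans i k)) > 1 - 2 * \<epsilon>"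
definition cyl :: "nat \<Rightarrow> nat \<Rightarrow> nat set" where "cyl L c = {i. i < 2 ^ n \<and> cc L i = c}"
definition far :: "nat \<Rightarrow> nat \<Rightarrow> real \<Rightarrow> bool" where "far d c q \<longleftrightarrow> dl d c q \<ge> ell d / 3"

lemma fin_cyl: "finite (cyl L c)" unfolding cyl_def by simp

lemma ans_Suc: "i < 2 ^ n \<Longrightarrow> ans i (Suc s) = ans i s @ [vv i (Qry \<omega> (ans i s))]"
proof -
  assume i: "i < 2 ^ n"
  interpret G: gdist "vv i" by (rule gd[OF i])
  have q: "0 < Qry \<omega> (ans i s)" "Qry \<omega> (ans i s) \<le> 1" using RA by auto
  show ?thesis unfolding ans_def using G.value_at_eq[OF q[unfolded ans_def]] by (simp add: Let_def)
qed

lemma near_count: "card {c0. c0 < 2 ^ d \<and> \<not> far d c0 q} \<le> 2"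
proof (rule card_window[where a = "(q - 1/4) / ell d - 4/3"])
  fix c0 assume "c0 \<in> {c0. c0 < 2 ^ d \<and> \<not> far d c0 q}"
  then have nf: "dl d c0 q < ell d / 3" by (auto simp: far_def)
  have lp: "ell d > 0" by (rule ell_pos)
  have mx: "AA d c0 - q \<le> dl d c0 q" "q - BB d c0 \<le> dl d c0 q" unfolding dl_def by auto
  have e1: "AA d c0 - q < ell d / 3" "q - BB d c0 < ell d / 3" using nf mx by linarith+
  have "real c0 * ell d < (q - 1/4) + ell d / 3" using e1 by (simp add: AA_def)
  then have "real c0 < ((q - 1/4) + ell d / 3) / ell d" using lp by (simp add: pos_less_divide_eq)
  then have u: "real c0 < (q - 1/4) / ell d + 1/3" using lp by (simp add: add_divide_distrib)
  have "(q - 1/4) - ell d - ell d / 3 < real c0 * ell d" using e1 by (simp add: AA_def BB_def)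
  then have "((q - 1/4) - ell d - ell d / 3) / ell d < real c0" using lp by (simp add: pos_divide_less_eq)
  then have l: "(q - 1/4) / ell d - 4/3 < real c0" using lp by (simp add: diff_divide_distrib)
  show "(q - 1/4) / ell d - 4/3 < real c0 \<and> real c0 < (q - 1/4) / ell d - 4/3 + 2" using u l by simp
qed

lemma cyl_sub: "L \<le> d \<Longrightarrow> d \<le> n \<Longrightarrow> i \<in> cyl d c' \<Longrightarrow> j \<in> cyl d c' \<Longrightarrow> cc L i = cc L j"
  unfolding cyl_def using cc_div by auto

lemma RR_same:
  assumes d: "d \<le> n" and far: "far d (cc d i) q" and same: "cc d j = cc d i"
  shows "RR j q = RR i q"
proof -
  have sd: "cc d' j = cc d' i" if "d' \<le> d" for d' using cc_div[OF that d] same by simp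
  have fj: "dl d (cc d j) q \<ge> ell d / 3" using far same by (simp add: far_def)
  have "RR j q = Min ((\<lambda>d'. gf d' (cc d' j) q) ` {..d})" by (rule RR_far[OF d fj])
  also have "\<dots> = Min ((\<lambda>d'. gf d' (cc d' i) q) ` {..d})" using sd by (intro arg_cong[where f=Min] image_cong) auto
  also have "\<dots> = RR i q" using RR_far[OF d] far by (simp add: far_def)
  finally show ?thesis .
qed

end

context hcount begin

lemma main_count:
  "s + r = k \<Longrightarrow> L \<le> n \<Longrightarrow> (\<forall>i\<in>cyl L c. \<forall>j\<in>cyl L c. ans i s = ans j s) \<Longrightarrow>
   real (card {i \<in> cyl L c. good i}) \<le> 2 * 9 ^ r * (3/2) ^ (n - L)"
proof (induction r arbitrary: s L c)
  case 0
  show ?case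
  proof (cases "cyl L c = {}")
    case True then show ?thesis by simp
  next
    case False
    then obtain i0 where i0: "i0 \<in> cyl L c" by blast
    define p0 where "p0 = Out \<omega> (ans i0 k)"
    have "{i \<in> cyl L c. good i} \<subseteq> {i. i < 2 ^ n \<and> rev_price (mkD (vv i)) p0 > 1 - 2 * \<epsilon>}"
    proof
      fix i assume i: "i \<in> {i \<in> cyl L c. good i}"
      then have "ans i s = ans i0 s" using 0(3) i0 by blast
      then have "ans i k = ans i0 k" using 0(1) by simp
      then show "i \<in> {i. i < 2 ^ n \<and> rev_price (mkD (vv i)) p0 > 1 - 2 * \<epsilon>}"
        using i by (auto simp: good_def p0_def cyl_def)
    qed
    then have "card {i \<in> cyl L c. good i} \<le> card {i. i < 2 ^ n \<and> rev_price (mkD (vv i)) p0 > 1 - 2 * \<epsilon>}"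
      by (intro card_mono) auto
    also have "\<dots> \<le> 2" by (rule good_count[OF eps small])
    finally have "real (card {i \<in> cyl L c. good i}) \<le> 2" by simp
    also have "(2::real) \<le> 2 * 9 ^ 0 * (3/2) ^ (n - L)" by simp
    finally show ?thesis .
  qed
next
  case (Suc r)
  define C where "C = cyl L c"
  show ?case
  proof (cases "C = {}")
    case True then show ?thesis by (simp add: C_def)
  next
    case False
    then obtain i0 where i0: "i0 \<in> C" by blast
    define as where "as = ans i0 s"
    define q where "q = Qry \<omega> as"
    have ansC: "ans i s = as" if "i \<in> C" for i using Suc.prems(3) that i0 unfolding C_def as_def by blast
    have ansC1: "ans i (Suc s) = as @ [vv i q]" if "i \<in> C" for i
      using ans_Suc[of i s] ansC[OF that] that by (simp add: q_def C_def cyl_def)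
    define stop where "stop = (\<lambda>d i. L \<le> d \<and> d \<le> n \<and> (far d (cc d i) q \<or> d = n) \<and>
                                   (\<forall>d'. L \<le> d' \<and> d' < d \<longrightarrow> \<not> far d' (cc d' i) q))"
    have ex_stop: "\<exists>d. stop d i" for i
    proof -
      define Pd where "Pd = (\<lambda>d. L \<le> d \<and> d \<le> n \<and> (far d (cc d i) q \<or> d = n))"
      have "\<exists>d. Pd d" using Suc.prems(2) unfolding Pd_def by blast
      then obtain d where d: "Pd d" "\<forall>m<d. \<not> Pd m" by (metis exists_least_iff)
      have "\<forall>d'. L \<le> d' \<and> d' < d \<longrightarrow> \<not> far d' (cc d' i) q"
        using d unfolding Pd_def by auto
      then show ?thesis using d(1) unfolding stop_def Pd_def by blast
    qed
    define Z where "Z = (\<lambda>d. cc d ` {i \<in> C. stop d i})"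
    have finZ: "finite (Z d)" for d unfolding Z_def C_def using fin_cyl by simp
    define K where "K = (\<lambda>d. 2 * 9 ^ r * (3/2::real) ^ (n - d))"
    have IHuse: "real (card {i \<in> cyl d c'. good i}) \<le> K d" if d: "L \<le> d" "d \<le> n" and c': "c' \<in> Z d" for d c'
    proof -
      obtain i1 where i1: "i1 \<in> C" "stop d i1" "c' = cc d i1" using c' unfolding Z_def by auto
      have i1n: "i1 < 2 ^ n" using i1 by (simp add: C_def cyl_def)
      have same: "ans j (Suc s) = ans i1 (Suc s)" if j: "j \<in> cyl d c'" for j
      proof -
        have i1c: "i1 \<in> cyl d c'" using i1 i1n by (simp add: cyl_def)
        have "cc L j = cc L i1" using cyl_sub[OF d i1c j] by simp
        then have jC: "j \<in> C" using i1(1) j by (simp add: C_def cyl_def)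
        have "vv j q = vv i1 q"
        proof (cases "far d (cc d i1) q")
          case True
          have "cc d j = cc d i1" using j i1 by (simp add: cyl_def)
          then have "RR j q = RR i1 q" by (rule RR_same[OF d(2) True])
          then show ?thesis by (simp add: vv_def)
        next
          case False
          then have "d = n" using i1(2) unfolding stop_def by auto
          then have "j = i1" using j i1 by (simp add: cyl_def cc_def)
          then show ?thesis by simp
        qed
        then show ?thesis using ansC1[OF jC] ansC1[OF i1(1)] by simp
      qed
      have AS: "\<forall>a\<in>cyl d c'. \<forall>b\<in>cyl d c'. ans a (Suc s) = ans b (Suc s)" using same by auto
      show ?thesis unfolding K_def by (rule Suc.IH[OF _ _ AS]) (use Suc.prems(1) d in simp_all)
    qed
    have cardZL: "card (Z L) \<le> 1"
    proof -
      have "Z L \<subseteq> {c}" unfolding Z_def C_def cyl_def by auto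
      then have "card (Z L) \<le> card {c}" by (intro card_mono) auto
      then show ?thesis by simp
    qed
    have cardZd: "card (Z d) \<le> 4" if d: "L < d" "d \<le> n" for d
    proof -
      define NS where "NS = {c0. c0 < 2 ^ (d - 1) \<and> \<not> far (d - 1) c0 q}"
      have cNS: "card NS \<le> 2" unfolding NS_def by (rule near_count)
      have finNS: "finite NS" unfolding NS_def by simp
      have "Z d \<subseteq> (\<lambda>c0. 2 * c0) ` NS \<union> (\<lambda>c0. 2 * c0 + 1) ` NS"
      proof
        fix c' assume "c' \<in> Z d"
        then obtain i where i: "i \<in> C" "stop d i" "c' = cc d i" unfolding Z_def by auto
        have in_: "i < 2 ^ n" using i by (simp add: C_def cyl_def)
        have "cc (d - 1) i = cc d i div 2 ^ (d - (d - 1))" using cc_div[of "d - 1" d i] d by simp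
        also have "d - (d - 1) = 1" using d by simp
        finally have c1: "cc (d - 1) i = c' div 2" using i by simp
        have "cc (d - 1) i < 2 ^ (d - 1)" using cc_lt[OF in_] d by simp
        moreover have "\<not> far (d - 1) (cc (d - 1) i) q" using i(2) d unfolding stop_def by auto
        ultimately have "c' div 2 \<in> NS" using c1 by (simp add: NS_def)
        moreover have "c' = 2 * (c' div 2) \<or> c' = 2 * (c' div 2) + 1" by presburger
        ultimately show "c' \<in> (\<lambda>c0. 2 * c0) ` NS \<union> (\<lambda>c0. 2 * c0 + 1) ` NS" by auto
      qed
      then have "card (Z d) \<le> card ((\<lambda>c0. 2 * c0) ` NS \<union> (\<lambda>c0. 2 * c0 + 1) ` NS)"
        using finNS by (intro card_mono) auto
      also have "\<dots> \<le> card ((\<lambda>c0. 2 * c0) ` NS) + card ((\<lambda>c0. 2 * c0 + 1) ` NS)" by (rule card_Un_le)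
      also have "\<dots> \<le> card NS + card NS" by (intro add_mono card_image_le finNS)
      finally show ?thesis using cNS by simp
    qed
    have cover: "{i \<in> C. good i} \<subseteq> (\<Union>d\<in>{L..n}. \<Union>c'\<in>Z d. {i \<in> cyl d c'. good i})"
    proof
      fix i assume i: "i \<in> {i \<in> C. good i}"
      obtain d where d: "stop d i" using ex_stop by blast
      then have "cc d i \<in> Z d" using i unfolding Z_def by auto
      moreover have "i \<in> cyl d (cc d i)" using i by (simp add: C_def cyl_def)
      ultimately show "i \<in> (\<Union>d\<in>{L..n}. \<Union>c'\<in>Z d. {i \<in> cyl d c'. good i})"
        using d i unfolding stop_def by auto
    qed
    have "card {i \<in> C. good i} \<le> card (\<Union>d\<in>{L..n}. \<Union>c'\<in>Z d. {i \<in> cyl d c'. good i})"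
      using cover finZ fin_cyl by (intro card_mono) auto
    also have "\<dots> \<le> (\<Sum>d\<in>{L..n}. card (\<Union>c'\<in>Z d. {i \<in> cyl d c'. good i}))" by (rule card_UN_le) simp
    also have "\<dots> \<le> (\<Sum>d\<in>{L..n}. \<Sum>c'\<in>Z d. card {i \<in> cyl d c'. good i})"
      by (intro sum_mono card_UN_le finZ)
    finally have c0: "card {i \<in> C. good i} \<le> (\<Sum>d\<in>{L..n}. \<Sum>c'\<in>Z d. card {i \<in> cyl d c'. good i})" .
    have c1: "real (card {i \<in> C. good i}) \<le> (\<Sum>d\<in>{L..n}. \<Sum>c'\<in>Z d. real (card {i \<in> cyl d c'. good i}))"
    proof -
      have "real (card {i \<in> C. good i}) \<le> real (\<Sum>d\<in>{L..n}. \<Sum>c'\<in>Z d. card {i \<in> cyl d c'. good i})"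
        using c0 by (simp only: of_nat_le_iff)
      then show ?thesis by simp
    qed
    have "(\<Sum>d\<in>{L..n}. \<Sum>c'\<in>Z d. real (card {i \<in> cyl d c'. good i})) \<le> (\<Sum>d\<in>{L..n}. real (card (Z d)) * K d)"
    proof (intro sum_mono)
      fix d assume d: "d \<in> {L..n}"
      show "(\<Sum>c'\<in>Z d. real (card {i \<in> cyl d c'. good i})) \<le> real (card (Z d)) * K d"
        using IHuse d by (intro sum_bounded_above) auto
    qed
    also have "\<dots> = real (card (Z L)) * K L + (\<Sum>d\<in>{Suc L..n}. real (card (Z d)) * K d)"
    proof -
      have "{L..n} = insert L {Suc L..n}" using Suc.prems(2) by auto
      then show ?thesis by simp
    qed
    also have "\<dots> \<le> 1 * K L + (\<Sum>d\<in>{Suc L..n}. 4 * K d)"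
    proof (intro add_mono sum_mono mult_right_mono)
      show "real (card (Z L)) \<le> 1" using cardZL by simp
      show "0 \<le> K L" by (simp add: K_def)
    next
      fix d assume "d \<in> {Suc L..n}"
      then show "real (card (Z d)) \<le> 4" "0 \<le> K d" using cardZd[of d] by (auto simp: K_def)
    qed
    also have "\<dots> = 2 * 9 ^ r * ((3/2) ^ (n - L) + 4 * (\<Sum>d\<in>{Suc L..n}. (3/2::real) ^ (n - d)))"
      by (simp add: K_def sum_distrib_left algebra_simps)
    also have "\<dots> \<le> 2 * 9 ^ r * ((3/2) ^ (n - L) + 4 * (2 * (3/2) ^ (n - L)))"
      using geo32[OF Suc.prems(2)] by (intro mult_left_mono add_left_mono) auto
    also have "\<dots> = 2 * 9 ^ Suc r * (3/2) ^ (n - L)" by simp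
    finally show ?thesis using c1 unfolding C_def by simp
  qed
qed

lemma total_count: "real (card {i. i < 2 ^ n \<and> good i}) \<le> 2 * 9 ^ k * (3/2) ^ n"
proof -
  have c: "cyl 0 0 = {i. i < 2 ^ n}" unfolding cyl_def cc_def by auto
  have H: "\<forall>i\<in>cyl 0 0. \<forall>j\<in>cyl 0 0. ans i 0 = ans j 0" by (simp add: ans_def)
  have "real (card {i \<in> cyl 0 0. good i}) \<le> 2 * 9 ^ k * (3/2) ^ (n - 0)"
    by (rule main_count[OF _ _ H]) auto
  then show ?thesis using c by simp
qed

end

lemma part1_core:
  assumes RA: "rand_alg P Qry" and eps: "0 < \<epsilon>" "\<epsilon> \<le> 1/8" and small: "24 * \<epsilon> * 8 ^ n \<le> 1"
    and guar: "\<forall>D. regular_dist D \<longrightarrow> exp_rev P Qry Out k D \<ge> ennreal ((1 - \<epsilon>) * OPT D)"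
  shows "(2::real) ^ n \<le> 4 * 9 ^ k * (3/2) ^ n"
proof -
  interpret H: hier n .
  define G0 where "G0 = 2 * 9 ^ k * (3/2::real) ^ n"
  have RA': "\<And>w as. Qry w as \<in> {0<..1}" using RA unfolding rand_alg_def by auto
  have P: "prob_space P" using RA unfolding rand_alg_def by auto
  have g: "exp_rev P Qry Out k (mkD (H.vv i)) \<ge> ennreal (1 - \<epsilon>)" if "i \<in> {i. i < 2 ^ n}" for i
  proof -
    have i: "i < 2 ^ n" using that by simp
    have "ennreal (1 - \<epsilon>) \<le> ennreal ((1 - \<epsilon>) * OPT (mkD (H.vv i)))"
      using H.opt_ge1[OF i] eps by (intro ennreal_leI) (simp add: mult_le_cancel_left1)
    also have "\<dots> \<le> exp_rev P Qry Out k (mkD (H.vv i))" using guar H.regular[OF i] by blast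
    finally show ?thesis .
  qed
  have pw: "(\<Sum>i\<in>{i. i < 2 ^ n}. ennreal (rev_price (mkD (H.vv i)) (Out \<omega> (answers Qry (mkD (H.vv i)) \<omega> k))))
      \<le> ennreal (real (2 ^ n) * (1 - 2 * \<epsilon>) + 2 * \<epsilon> * G0)" for \<omega>
  proof -
    interpret C: hcount n Qry Out \<omega> k \<epsilon> using RA' eps small by unfold_locales auto
    let ?I = "{i. i < (2::nat) ^ n}"
    define h where "h = (\<lambda>i. if C.good i then 1 else 1 - 2 * \<epsilon>)"
    have each: "rev_price (mkD (H.vv i)) (Out \<omega> (answers Qry (mkD (H.vv i)) \<omega> k)) \<le> h i" if "i \<in> ?I" for i
      using H.rev_le1[of i] that unfolding h_def C.good_def C.ans_def by auto
    have "(\<Sum>i\<in>?I. ennreal (rev_price (mkD (H.vv i)) (Out \<omega> (answers Qry (mkD (H.vv i)) \<omega> k))))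
        \<le> (\<Sum>i\<in>?I. ennreal (h i))" using each by (intro sum_mono ennreal_leI) auto
    also have "\<dots> = ennreal (\<Sum>i\<in>?I. h i)" using eps by (intro sum_ennreal) (auto simp: h_def)
    also have "(\<Sum>i\<in>?I. h i) \<le> real (2 ^ n) * (1 - 2 * \<epsilon>) + 2 * \<epsilon> * G0"
    proof -
      have "(\<Sum>i\<in>?I. h i) = (\<Sum>i\<in>?I. (1 - 2 * \<epsilon>) + 2 * \<epsilon> * (if C.good i then 1 else 0))"
        by (intro sum.cong) (auto simp: h_def)
      also have "\<dots> = real (2 ^ n) * (1 - 2 * \<epsilon>) + 2 * \<epsilon> * real (card {i. i < 2 ^ n \<and> C.good i})"
      proof -
        have "?I \<inter> {i. C.good i} = {i. i < 2 ^ n \<and> C.good i}" by auto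
        then show ?thesis by (simp add: sum.distrib sum_distrib_left[symmetric] sum.If_cases)
      qed
      also have "\<dots> \<le> real (2 ^ n) * (1 - 2 * \<epsilon>) + 2 * \<epsilon> * G0"
        using C.total_count eps unfolding G0_def by (intro add_left_mono mult_left_mono) auto
      finally show ?thesis .
    qed
    then have "ennreal (\<Sum>i\<in>?I. h i) \<le> ennreal (real (2 ^ n) * (1 - 2 * \<epsilon>) + 2 * \<epsilon> * G0)"
      by (rule ennreal_leI)
    finally show ?thesis .
  qed
  have "real (card {i. i < (2::nat) ^ n}) * (1 - \<epsilon>) \<le> real (2 ^ n) * (1 - 2 * \<epsilon>) + 2 * \<epsilon> * G0"
    by (rule yao[where D = "\<lambda>i. mkD (H.vv i)" and P = P and Qry = Qry and Out = Out and k = k])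
       (use P g pw eps in \<open>auto simp: G0_def\<close>)
  then have "real (2 ^ n) * \<epsilon> \<le> 2 * \<epsilon> * G0" by (simp add: algebra_simps)
  then have "real (2 ^ n) \<le> 2 * G0" using eps by (simp add: mult.commute mult.left_commute)
  then show ?thesis unfolding G0_def by simp
qed

lemma part1:
  "\<exists>c>0. \<exists>\<epsilon>0>0. \<forall>\<epsilon>. 0 < \<epsilon> \<and> \<epsilon> < \<epsilon>0 \<longrightarrow>
      (\<forall>P Qry Out k. rand_alg P Qry \<and>
          (\<forall>D. regular_dist D \<longrightarrow> exp_rev P Qry Out k D \<ge> ennreal ((1 - \<epsilon>) * OPT D))
        \<longrightarrow> real k \<ge> c * ln (1 / \<epsilon>))"
  apply (rule exI[of _ "1/216"], rule conjI, simp)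
  apply (rule exI[of _ "exp (-200)"], rule conjI, simp)
proof (intro allI impI)
  fix \<epsilon> :: real and P Qry Out k
  assume e: "0 < \<epsilon> \<and> \<epsilon> < exp (-200)"
  assume A: "rand_alg P Qry \<and> (\<forall>D. regular_dist D \<longrightarrow> exp_rev P Qry Out k D \<ge> ennreal ((1 - \<epsilon>) * OPT D))"
  define L where "L = ln (1 / \<epsilon>)"
  have e0: "\<epsilon> > 0" using e by simp
  have L200: "L > 200"
  proof -
    have "exp 200 < 1 / \<epsilon>" using e by (simp add: exp_minus field_simps)
    then have "ln (exp 200) < ln (1 / \<epsilon>)" using e0 by (subst ln_less_cancel_iff) auto
    then show ?thesis by (simp add: L_def)
  qed
  have esmall: "\<epsilon> \<le> 1/201"
  proof -
    have "201 \<le> exp (200::real)" using exp_ge_add_one_self[of 200] by simp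
    then have "exp (-200::real) \<le> 1/201" by (simp add: exp_minus field_simps)
    then show ?thesis using e by simp
  qed
  define X where "X = ln (1 / (24 * \<epsilon>))"
  have ln24: "ln (24::real) \<le> 23" using ln_le_minus_one[of 24] by simp
  have X: "X = L - ln 24" unfolding X_def L_def using e0 by (simp add: ln_div ln_mult)
  then have XL: "X \<ge> L - 23" using ln24 by simp
  have X0: "X \<ge> 0" using XL L200 by simp
  define n where "n = nat \<lfloor>X / 3\<rfloor>"
  have fl: "real n = real_of_int \<lfloor>X / 3\<rfloor>" using X0 unfolding n_def by simp
  have nX: "real n \<le> X / 3" "real n \<ge> X / 3 - 1" using fl by linarith+
  have ln8: "ln (8::real) \<le> 3"
  proof -
    have "ln (8::real) = ln (2 ^ 3)" by simp
    also have "\<dots> = 3 * ln 2" by (subst ln_realpow) auto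
    finally have "ln (8::real) = 3 * ln 2" .
    moreover have "ln (2::real) \<le> 1" using ln_le_minus_one[of 2] by simp
    ultimately show ?thesis by simp
  qed
  have small: "24 * \<epsilon> * 8 ^ n \<le> 1"
  proof -
    have "real n * ln 8 \<le> real n * 3" using ln8 by (intro mult_left_mono) auto
    also have "\<dots> \<le> X" using nX by simp
    finally have "ln ((8::real) ^ n) \<le> ln (1 / (24 * \<epsilon>))" unfolding X_def by (simp add: ln_realpow)
    then have "(8::real) ^ n \<le> 1 / (24 * \<epsilon>)" using e0 by (subst (asm) ln_le_cancel_iff) auto
    then show ?thesis using e0 by (simp add: field_simps)
  qed
  have core: "(2::real) ^ n \<le> 4 * 9 ^ k * (3/2) ^ n"
    by (rule part1_core[where P = P and Qry = Qry and Out = Out]) (use A e0 esmall small in auto)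
  have "(4/3::real) ^ n \<le> 4 * 9 ^ k"
  proof -
    have "(4/3::real) ^ n * (3/2) ^ n = 2 ^ n" by (simp add: power_mult_distrib[symmetric])
    then show ?thesis using core by (smt (verit) mult_le_cancel_right zero_less_power divide_pos_pos)
  qed
  then have "ln ((4/3::real) ^ n) \<le> ln (4 * 9 ^ k)" by (subst ln_le_cancel_iff) auto
  then have lnin: "real n * ln (4/3) \<le> ln 4 + real k * ln 9" by (simp add: ln_mult ln_realpow)
  have l43: "ln (4/3::real) \<ge> 2/9"
    using ln_one_plus_pos_lower_bound[of "1/3::real"] by (simp add: power2_eq_square)
  have l4: "ln (4::real) \<le> 3" using ln_le_minus_one[of 4] by simp
  have l9: "ln (9::real) \<le> 8" using ln_le_minus_one[of 9] by simp
  have "real n * (2/9) \<le> real n * ln (4/3)" using l43 by (intro mult_left_mono) auto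
  also have "\<dots> \<le> ln 4 + real k * ln 9" by (rule lnin)
  also have "\<dots> \<le> 3 + real k * 8" using l4 l9 by (intro add_mono mult_left_mono) auto
  finally have nk: "real n * (2/9) \<le> 3 + real k * 8" .
  have "real n \<ge> (L - 26) / 3" using nX XL by simp
  then have "(L - 26) / 3 * (2/9) \<le> real n * (2/9)" by (intro mult_right_mono) auto
  then have "(L - 26) / 3 * (2/9) \<le> 3 + real k * 8" using nk by linarith
  then have "real k \<ge> (L - 26) / 108 - 3/8" by (simp add: field_simps)
  moreover have "(L - 26) / 108 - 3/8 \<ge> 1/216 * L" using L200 by (simp add: field_simps)
  ultimately have "1/216 * L \<le> real k" by linarith
  then show "1/216 * ln (1 / \<epsilon>) \<le> real k" unfolding L_def .
qed

theorem mainTheorem11: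
  shows
  "(\<exists>c>0. \<exists>\<epsilon>0>0. \<forall>\<epsilon>. 0 < \<epsilon> \<and> \<epsilon> < \<epsilon>0 \<longrightarrow>
      (\<forall>P Qry Out k. rand_alg P Qry \<and>
          (\<forall>D. regular_dist D \<longrightarrow> exp_rev P Qry Out k D \<ge> ennreal ((1 - \<epsilon>) * OPT D))
        \<longrightarrow> real k \<ge> c * ln (1 / \<epsilon>)))
 \<and> (\<exists>c>0. \<exists>\<epsilon>0>0. \<forall>\<epsilon>. 0 < \<epsilon> \<and> \<epsilon> < \<epsilon>0 \<longrightarrow>
      (\<forall>P Qry Out k. rand_alg P Qry \<and>
          (\<forall>D. bounded_dist 0 1 D \<longrightarrow> exp_rev P Qry Out k D \<ge> ennreal (OPT D - \<epsilon>))
        \<longrightarrow> real k \<ge> c / \<epsilon>))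
 \<and> (\<exists>c>0. \<exists>\<epsilon>0>0. \<forall>\<epsilon> H. 0 < \<epsilon> \<and> \<epsilon> < \<epsilon>0 \<and> 2 \<le> H \<longrightarrow>
      (\<forall>P Qry Out k. rand_alg P Qry \<and>
          (\<forall>D. bounded_dist 1 H D \<longrightarrow> exp_rev P Qry Out k D \<ge> ennreal ((1 - \<epsilon>) * OPT D))
        \<longrightarrow> real k \<ge> c * ln H / \<epsilon>))"
  using part1 part2 part3 by blast

end
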